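(* Let $\vec G=(G,\alpha,w)$ be a finite magnetic graph with vertex set $V$, let $V_0\subseteq V$ and let $V_1\subsetneq V_0$ be a proper subset (the distinguished vertices). Then for any two different $s$-partitions $A$ and $B$ of a natural number $r\ge 4$, the $V_1$-contracted $A$-union $\vec F_{A,V_1}$ and $V_1$-contracted $B$-union $\vec F_{B,V_1}$ of the frame $(F_a(\vec G,V_0))_{a\in\mathbb{N}}$ are isospectral and not isomorphic.
   Context: A graph $G=(V,E,\partial)$: finite disjoint sets $V,E$, incidence $\partial e=(\partial_-e,\partial_+e)$, inversion $e\mapsto\bar e$ ($\bar{\bar e}=e$, $\bar e\ne e$, $\partial_\pm\bar e=\partial_\mp e$); loops/multiple edges allowed; $E_v=\{e:\partial_-e=v\}$, $\deg v=|E_v|>0$. A magnetic graph $\vec G=(G,\alpha,w)$ has $w:E\to(0,\infty)$, $w_{\bar e}=w_e$, and $\alpha:E\to\mathbb{R}/2\pi\mathbb{Z}$, $\alpha_{\bar e}=-\alpha_e$; $\deg^wv=\sum_{e\in E_v}w_e$. The magnetic Laplacian on $\ell^2(V,\deg^w)$ is $(\Delta f)(v)=f(v)-\frac1{\deg^wv}\sum_{e\in E_v}w_ee^{i\alpha_e}f(\partial_+e)$; two magnetic graphs are isospectral if their Laplacians have the same eigenvalues with the same multiplicities, and isomorphic if there is a graph isomorphism (bijections on vertices and edges commuting with incidence and inversion) preserving $w$ and $\alpha$. Contraction of vertices along an equivalence relation keeps all edges (with weights and potentials) and replaces vertices by classes. Frame member: $G^a$ is the disjoint union of $a$ copies $G\times\{j\}$;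 with $(v,i)\sim(v',j)$ iff $(v,i)=(v',j)$ or ($v=v'\in V_0$), $F_a(\vec G,V_0)=G^a/\!\sim$ with $w_{(e,j)}=w_e$, $\alpha_{(e,j)}=\alpha_e$. An $s$-partition of $r$ is a multiset $A=\{\!\{a_1,\dots,a_s\}\!\}$ of natural numbers with sum $r$. $\vec F_A=\bigsqcup_{i=1}^sF_{a_i}(\vec G,V_0)\times\{i\}$, and $\vec F_{A,V_1}$ is obtained from $\vec F_A$ by contracting, for each $v_1\in V_1$, the $s$ vertices $([v_1],i)$, $i=1,\dots,s$, into one vertex. *)

theory Defs
  imports Complex_Main "HOL-Library.Multiset"
begin

text \<open>The potential is stored as a real number and is only meaningful modulo 2 pi.\<close>

record ('v, 'e) mgraph =
  verts :: "'v set"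
  edges :: "'e set"
  src   :: "'e \<Rightarrow> 'v"
  tgt   :: "'e \<Rightarrow> 'v"
  inve  :: "'e \<Rightarrow> 'e"
  wt    :: "'e \<Rightarrow> real"
  pot   :: "'e \<Rightarrow> real"

definition cong2pi :: "real \<Rightarrow> real \<Rightarrow> bool" where
  "cong2pi x y \<longleftrightarrow> (\<exists>k::int. x = y + 2 * pi * of_int k)"

definition out_edges :: "('v, 'e) mgraph \<Rightarrow> 'v \<Rightarrow> 'e set" where
  "out_edges G v = {e \<in> edges G. src G e = v}"

definition magnetic_graph :: "('v, 'e) mgraph \<Rightarrow> bool" where
  "magnetic_graph G \<longleftrightarrow>
     finite (verts G) \<and> finite (edges G) \<and>
     (\<forall>e \<in> edges G. src G e \<in> verts G \<and> tgt G e \<in> verts G \<and>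
        inve G e \<in> edges G \<and> inve G (inve G e) = e \<and> inve G e \<noteq> e \<and>
        src G (inve G e) = tgt G e \<and> tgt G (inve G e) = src G e \<and>
        wt G e > 0 \<and> wt G (inve G e) = wt G e \<and>
        cong2pi (pot G (inve G e)) (- pot G e)) \<and>
     (\<forall>v \<in> verts G. out_edges G v \<noteq> {})"

definition wdeg :: "('v, 'e) mgraph \<Rightarrow> 'v \<Rightarrow> real" where
  "wdeg G v = (\<Sum>e \<in> out_edges G v. wt G e)"

definition mag_laplacian :: "('v, 'e) mgraph \<Rightarrow> ('v \<Rightarrow> complex) \<Rightarrow> 'v \<Rightarrow> complex" where
  "mag_laplacian G f v = f v - complex_of_real (1 / wdeg G v) *
      (\<Sum>e \<in> out_edges G v. complex_of_real (wt G e) * cis (pot G e) * f (tgt G e))"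

definition is_eigenfunction :: "('v, 'e) mgraph \<Rightarrow> complex \<Rightarrow> ('v \<Rightarrow> complex) \<Rightarrow> bool" where
  "is_eigenfunction G \<mu> f \<longleftrightarrow>
     (\<forall>v. v \<notin> verts G \<longrightarrow> f v = 0) \<and>
     (\<forall>v \<in> verts G. mag_laplacian G f v = \<mu> * f v)"

definition lin_indep_fam :: "nat \<Rightarrow> (nat \<Rightarrow> 'v \<Rightarrow> complex) \<Rightarrow> bool" where
  "lin_indep_fam n f \<longleftrightarrow>
     (\<forall>c :: nat \<Rightarrow> complex. (\<forall>v. (\<Sum>i<n. c i * f i v) = 0) \<longrightarrow> (\<forall>i<n. c i = 0))"

definition eig_mult :: "('v, 'e) mgraph \<Rightarrow> complex \<Rightarrow> nat" where
  "eig_mult G \<mu> = Max {n. \<exists>f. (\<forall>i<n. is_eigenfunction G \<mu> (f i)) \<and> lin_indep_fam n f}"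

definition isospectral :: "('v, 'e) mgraph \<Rightarrow> ('w, 'f) mgraph \<Rightarrow> bool" where
  "isospectral G H \<longleftrightarrow> (\<forall>\<mu>. eig_mult G \<mu> = eig_mult H \<mu>)"

definition mg_isomorphic :: "('v, 'e) mgraph \<Rightarrow> ('w, 'f) mgraph \<Rightarrow> bool" where
  "mg_isomorphic G H \<longleftrightarrow>
     (\<exists>\<phi> \<psi>. bij_betw \<phi> (verts G) (verts H) \<and> bij_betw \<psi> (edges G) (edges H) \<and>
        (\<forall>e \<in> edges G. src H (\<psi> e) = \<phi> (src G e) \<and> tgt H (\<psi> e) = \<phi> (tgt G e) \<and>
           \<psi> (inve G e) = inve H (\<psi> e) \<and> wt H (\<psi> e) = wt G e \<and>
           cong2pi (pot H (\<psi> e)) (pot G e)))"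

definition contract :: "('v, 'e) mgraph \<Rightarrow> 'v rel \<Rightarrow> ('v set, 'e) mgraph" where
  "contract G R = \<lparr> verts = verts G // R, edges = edges G,
      src = (\<lambda>e. R `` {src G e}), tgt = (\<lambda>e. R `` {tgt G e}),
      inve = inve G, wt = wt G, pot = pot G \<rparr>"

definition disj_union :: "('v, 'e) mgraph list \<Rightarrow> ('v \<times> nat, 'e \<times> nat) mgraph" where
  "disj_union Gs = \<lparr>
      verts = (\<Union>i \<in> {1..length Gs}. verts (Gs ! (i - 1)) \<times> {i}),
      edges = (\<Union>i \<in> {1..length Gs}. edges (Gs ! (i - 1)) \<times> {i}),
      src = (\<lambda>(e, i). (src (Gs ! (i - 1)) e, i)),
      tgt = (\<lambda>(e, i). (tgt (Gs ! (i - 1)) e, i)),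
      inve = (\<lambda>(e, i). (inve (Gs ! (i - 1)) e, i)),
      wt = (\<lambda>(e, i). wt (Gs ! (i - 1)) e),
      pot = (\<lambda>(e, i). pot (Gs ! (i - 1)) e) \<rparr>"

definition copies :: "nat \<Rightarrow> ('v, 'e) mgraph \<Rightarrow> ('v \<times> nat, 'e \<times> nat) mgraph" where
  "copies a G = disj_union (replicate a G)"

definition frame_rel :: "('v, 'e) mgraph \<Rightarrow> 'v set \<Rightarrow> nat \<Rightarrow> ('v \<times> nat) rel" where
  "frame_rel G V0 a = {((v, i), (v', j)).
      v \<in> verts G \<and> v' \<in> verts G \<and> i \<in> {1..a} \<and> j \<in> {1..a} \<and>
      ((v, i) = (v', j) \<or> (v = v' \<and> v \<in> V0))}"

definition frame :: "('v, 'e) mgraph \<Rightarrow> 'v set \<Rightarrow> nat \<Rightarrow> (('v \<times> nat) set, 'e \<times> nat) mgraph" where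
  "frame G V0 a = contract (copies a G) (frame_rel G V0 a)"

definition is_partition :: "nat \<Rightarrow> nat \<Rightarrow> nat multiset \<Rightarrow> bool" where
  "is_partition s r A \<longleftrightarrow> 0 \<notin># A \<and> size A = s \<and> sum_mset A = r"

text \<open>A-union F_A: disjoint union of F_{a_i}(G,V0) x {i}, i = 1..s, where
  a_1,...,a_s is an enumeration (here: the sorted one) of A.\<close>
definition frame_union :: "('v, 'e) mgraph \<Rightarrow> 'v set \<Rightarrow> nat multiset \<Rightarrow>
    (('v \<times> nat) set \<times> nat, ('e \<times> nat) \<times> nat) mgraph" where
  "frame_union G V0 A = disj_union (map (frame G V0) (sorted_list_of_multiset A))"

text \<open>V1-contracted A-union: for each v1 in V1, the s vertices ([v1], i) are merged;
  [v1] is the class of (v1, 1), i.e. the class containing (v1, 1).\<close>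
definition contr_rel :: "(('v \<times> nat) set \<times> nat, 'f) mgraph \<Rightarrow> 'v set \<Rightarrow>
    (('v \<times> nat) set \<times> nat) rel" where
  "contr_rel F V1 = {(x, y). x \<in> verts F \<and> y \<in> verts F \<and>
      (x = y \<or> (\<exists>v1 \<in> V1. (v1, 1) \<in> fst x \<and> (v1, 1) \<in> fst y))}"

definition contracted_union :: "('v, 'e) mgraph \<Rightarrow> 'v set \<Rightarrow> 'v set \<Rightarrow> nat multiset \<Rightarrow>
    ((('v \<times> nat) set \<times> nat) set, ('e \<times> nat) \<times> nat) mgraph" where
  "contracted_union G V0 V1 A =
     (let F = frame_union G V0 A in contract F (contr_rel F V1))"

end

theory Submission
  imports Defs
begin


declare One_nat_def [simp del]

definition CC :: "(nat \<Rightarrow> nat) \<Rightarrow> nat \<Rightarrow> (nat \<times> nat) set" where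
  "CC a s = (SIGMA i:{1..s}. {1..a i})"

definition FF :: "(nat \<Rightarrow> nat) \<Rightarrow> nat \<Rightarrow> (nat \<times> nat) set" where
  "FF a s = (SIGMA i:{1..s}. {1..<a i})"

definition nb :: "nat \<Rightarrow> (nat \<Rightarrow> nat) \<Rightarrow> nat \<Rightarrow> nat \<times> nat \<Rightarrow> (nat \<times> nat) set" where
  "nb t a s c = (if t = 2 then CC a s else if t = 1 then {fst c} \<times> {1..a (fst c)} else {c})"

definition mmean :: "(nat \<Rightarrow> nat) \<Rightarrow> nat \<Rightarrow> nat \<Rightarrow> (nat \<times> nat \<Rightarrow> complex) \<Rightarrow> complex" where
  "mmean a s r x = (\<Sum>c\<in>CC a s. x c) / of_nat r"

definition bmean :: "(nat \<Rightarrow> nat) \<Rightarrow> nat \<Rightarrow> (nat \<times> nat \<Rightarrow> complex) \<Rightarrow> complex" where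
  "bmean a i x = (\<Sum>j=1..a i. x (i, j)) / of_nat (a i)"

definition dd :: "(nat \<Rightarrow> nat) \<Rightarrow> (nat \<times> nat \<Rightarrow> complex) \<Rightarrow> nat \<times> nat \<Rightarrow> complex" where
  "dd a x c = x c - bmean a (fst c) x"

definition epart :: "(nat \<Rightarrow> nat) \<Rightarrow> (nat \<Rightarrow> nat) \<Rightarrow> nat \<Rightarrow> nat \<Rightarrow> (nat \<times> nat \<Rightarrow> complex) \<Rightarrow> nat \<Rightarrow> complex" where
  "epart a b s r x i = of_nat (a i) / of_nat (b i) * (bmean a i x - mmean a s r x)"

definition dpart :: "(nat \<Rightarrow> nat) \<Rightarrow> (nat \<Rightarrow> nat) \<Rightarrow> (nat \<times> nat \<Rightarrow> nat \<times> nat)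
    \<Rightarrow> (nat \<times> nat \<Rightarrow> complex) \<Rightarrow> nat \<times> nat \<Rightarrow> complex" where
  "dpart a b \<sigma> x c = (if snd c < b (fst c) then dd a x (\<sigma> c)
         else - (\<Sum>j\<in>{1..<b (fst c)}. dd a x (\<sigma> (fst c, j))))"

definition MM :: "(nat \<Rightarrow> nat) \<Rightarrow> (nat \<Rightarrow> nat) \<Rightarrow> nat \<Rightarrow> nat \<Rightarrow> (nat \<times> nat \<Rightarrow> nat \<times> nat)
    \<Rightarrow> (nat \<times> nat \<Rightarrow> complex) \<Rightarrow> nat \<times> nat \<Rightarrow> complex" where
  "MM a b s r \<sigma> x c = mmean a s r x + epart a b s r x (fst c) + dpart a b \<sigma> x c"

lemma MM_lin: "MM a b s r \<sigma> (\<lambda>c. \<alpha> * x c + \<beta> * y c) c = \<alpha> * MM a b s r \<sigma> x c + \<beta> * MM a b s r \<sigma> y c"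
  unfolding MM_def mmean_def bmean_def dd_def epart_def dpart_def
  by (simp add: sum.distrib sum_distrib_left algebra_simps add_divide_distrib diff_divide_distrib
        sum_subtractf)

lemma MM_zero: "MM a b s r \<sigma> (\<lambda>c. 0) c = 0"
  using MM_lin[of a b s r \<sigma> 0 "\<lambda>c. 0" 0 "\<lambda>c. 0" c] by simp

lemma MM_add: "MM a b s r \<sigma> (\<lambda>c. x c + y c) c = MM a b s r \<sigma> x c + MM a b s r \<sigma> y c"
  using MM_lin[of a b s r \<sigma> 1 x 1 y c] by simp

lemma MM_scale: "MM a b s r \<sigma> (\<lambda>c. \<alpha> * x c) c = \<alpha> * MM a b s r \<sigma> x c"
  using MM_lin[of a b s r \<sigma> \<alpha> x 0 x c] by simp

lemma MM_div: "MM a b s r \<sigma> (\<lambda>c. x c / z) c = MM a b s r \<sigma> x c / z"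
  using MM_lin[of a b s r \<sigma> "inverse z" x 0 x c] by (simp add: divide_inverse mult.commute)

lemma MM_diff: "MM a b s r \<sigma> (\<lambda>c. x c - y c) c = MM a b s r \<sigma> x c - MM a b s r \<sigma> y c"
  using MM_lin[of a b s r \<sigma> 1 x "-1" y c] by simp

lemma MM_sum: "finite K \<Longrightarrow> MM a b s r \<sigma> (\<lambda>c. \<Sum>k\<in>K. x k c) c' = (\<Sum>k\<in>K. MM a b s r \<sigma> (x k) c')"
proof (induction K rule: finite_induct)
  case empty
  then show ?case using MM_zero by simp
next
  case (insert k K)
  then show ?case using MM_add[of a b s r \<sigma> "x k" "\<lambda>c. \<Sum>k\<in>K. x k c" c'] by simp
qed

lemma MM_lincomb: "finite K \<Longrightarrow> MM a b s r \<sigma> (\<lambda>c. \<Sum>k\<in>K. \<alpha> k * x k c) c' = (\<Sum>k\<in>K. \<alpha> k * MM a b s r \<sigma> (x k) c')"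
  using MM_sum[of K a b s r \<sigma> "\<lambda>k c. \<alpha> k * x k c" c'] MM_scale by simp

lemma sum_CC: "(\<Sum>c\<in>CC a s. f c) = (\<Sum>i=1..s. \<Sum>j=1..a i. f (i, j))"
  unfolding CC_def by (simp add: sum.Sigma)

lemma FF_sub_CC: "FF a s \<subseteq> CC a s"
  unfolding FF_def CC_def by auto

lemma finite_CC[simp]: "finite (CC a s)"
  unfolding CC_def by auto

lemma card_CC: "card (CC a s) = (\<Sum>i=1..s. a i)"
  unfolding CC_def by (simp add: card_SigmaI)

lemma sum_last: "0 < n \<Longrightarrow> (\<Sum>j=1..n. f j) = f n + (\<Sum>j\<in>{1..<n}. f (j::nat))"
proof -
  assume "0 < n"
  then have "(\<Sum>j=1..n. f j) = (\<Sum>j\<in>{1..<Suc n}. f j)"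
    by (simp add: atLeastLessThanSuc_atLeastAtMost)
  also have "\<dots> = (\<Sum>j\<in>{1..<n}. f j) + f n"
    using \<open>0 < n\<close> by (intro sum.atLeastLessThan_Suc) auto
  finally show ?thesis by (simp add: add.commute)
qed

lemma mem_CC: "(i, j) \<in> CC a s \<longleftrightarrow> i \<in> {1..s} \<and> j \<in> {1..a i}"
  unfolding CC_def by auto

lemma sum_single_times: "(\<Sum>c\<in>{i}\<times>B. f c) = (\<Sum>j\<in>B. f (i,j))"
proof -
  have "{i}\<times>B = Pair i ` B" by auto
  then show ?thesis by (simp add: sum.reindex inj_on_def)
qed

locale mdl =
  fixes a b :: "nat \<Rightarrow> nat" and s r :: nat and \<sigma> :: "nat \<times> nat \<Rightarrow> nat \<times> nat"
  assumes apos: "\<And>i. i \<in> {1..s} \<Longrightarrow> a i > 0"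
    and bpos: "\<And>i. i \<in> {1..s} \<Longrightarrow> b i > 0"
    and asum: "(\<Sum>i=1..s. a i) = r" and bsum: "(\<Sum>i=1..s. b i) = r"
    and sig: "bij_betw \<sigma> (FF b s) (FF a s)"
    and rpos: "r > 0"
begin

abbreviation "M \<equiv> MM a b s r \<sigma>"

lemma dd_sum: "i \<in> {1..s} \<Longrightarrow> (\<Sum>j=1..a i. dd a x (i, j)) = 0"
  using apos[of i] unfolding dd_def bmean_def
  by (simp add: sum_subtractf)

lemma dd_last: "i \<in> {1..s} \<Longrightarrow> dd a x (i, a i) = - (\<Sum>j\<in>{1..<a i}. dd a x (i, j))"
proof -
  assume i: "i \<in> {1..s}"
  have "(\<Sum>j=1..a i. dd a x (i, j)) = dd a x (i, a i) + (\<Sum>j\<in>{1..<a i}. dd a x (i, j))"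
    using apos[OF i] by (simp add: sum_last)
  then show ?thesis using dd_sum[OF i] by (simp add: eq_neg_iff_add_eq_0)
qed

lemma dpart_sum: "i \<in> {1..s} \<Longrightarrow> (\<Sum>j=1..b i. dpart a b \<sigma> x (i, j)) = 0"
proof -
  assume i: "i \<in> {1..s}"
  have "(\<Sum>j=1..b i. dpart a b \<sigma> x (i, j)) = dpart a b \<sigma> x (i, b i) + (\<Sum>j\<in>{1..<b i}. dpart a b \<sigma> x (i, j))"
    using bpos[OF i] by (simp add: sum_last)
  also have "(\<Sum>j\<in>{1..<b i}. dpart a b \<sigma> x (i, j)) = (\<Sum>j\<in>{1..<b i}. dd a x (\<sigma> (i, j)))"
    by (rule sum.cong) (auto simp: dpart_def)
  finally show ?thesis by (simp add: dpart_def)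
qed

lemma block_sum_M: "i \<in> {1..s} \<Longrightarrow> (\<Sum>j=1..b i. M x (i, j)) = of_nat (b i) * (mmean a s r x + epart a b s r x i)"
  unfolding MM_def using dpart_sum[of i x] by (simp add: sum.distrib algebra_simps)

lemma sum_a_bmean: "(\<Sum>i=1..s. of_nat (a i) * bmean a i x) = (\<Sum>c\<in>CC a s. x c)"
  unfolding sum_CC bmean_def using apos by (intro sum.cong) auto

lemma total_M: "(\<Sum>c\<in>CC b s. M x c) = (\<Sum>c\<in>CC a s. x c)"
proof -
  have "(\<Sum>c\<in>CC b s. M x c) = (\<Sum>i=1..s. of_nat (b i) * (mmean a s r x + epart a b s r x i))"
    unfolding sum_CC using block_sum_M by (intro sum.cong) auto
  also have "\<dots> = (\<Sum>i=1..s. of_nat (b i) * mmean a s r x + of_nat (a i) * bmean a i x - of_nat (a i) * mmean a s r x)"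
    unfolding epart_def using bpos by (intro sum.cong) (auto simp: field_simps)
  also have "\<dots> = (\<Sum>i=1..s. of_nat (b i)) * mmean a s r x + (\<Sum>c\<in>CC a s. x c) - (\<Sum>i=1..s. of_nat (a i)) * mmean a s r x"
    by (simp add: sum.distrib sum_subtractf sum_a_bmean flip: sum_distrib_right)
  also have "\<dots> = (\<Sum>c\<in>CC a s. x c)"
    by (simp flip: of_nat_sum add: asum bsum)
  finally show ?thesis by simp
qed


lemma spos: "s > 0"
  using asum rpos by (cases s) auto

lemma one_in_CC: "i \<in> {1..s} \<Longrightarrow> (i, 1) \<in> CC a s" "i \<in> {1..s} \<Longrightarrow> (i, 1) \<in> CC b s"
  using apos[of i] bpos[of i] by (auto simp: mem_CC One_nat_def Suc_le_eq)

lemma dpart_zero: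
  assumes "\<forall>c\<in>CC a s. dd a x c = 0" "c \<in> CC b s"
  shows "dpart a b \<sigma> x c = 0"
proof -
  have sF: "\<And>c. c \<in> FF b s \<Longrightarrow> dd a x (\<sigma> c) = 0"
    using assms(1) FF_sub_CC bij_betw_apply[OF sig] by blast
  obtain i j where c: "c = (i, j)" by force
  show ?thesis
  proof (cases "j < b i")
    case True
    then have "c \<in> FF b s" using assms(2) by (auto simp: c FF_def mem_CC)
    then show ?thesis using True sF by (simp add: dpart_def c)
  next
    case False
    have "\<And>j'. j' \<in> {1..<b i} \<Longrightarrow> dd a x (\<sigma> (i, j')) = 0"
      using assms(2) by (intro sF) (auto simp: c FF_def mem_CC)
    then show ?thesis using False by (simp add: dpart_def c)
  qed
qed

lemma M_inj:
  assumes "\<forall>c\<in>CC b s. M x c = 0"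
  shows "\<forall>c\<in>CC a s. x c = 0"
proof -
  have tot: "(\<Sum>c\<in>CC a s. x c) = 0" using total_M[of x] assms by simp
  then have mm: "mmean a s r x = 0" by (simp add: mmean_def)
  have ep: "epart a b s r x i = 0" if i: "i \<in> {1..s}" for i
  proof -
    have "\<forall>j\<in>{1..b i}. M x (i, j) = 0" using assms i by (simp add: mem_CC)
    then have "(\<Sum>j=1..b i. M x (i, j)) = 0" by simp
    then have "of_nat (b i) * epart a b s r x i = 0" using block_sum_M[OF i, of x] mm by simp
    then show ?thesis using bpos[OF i] by simp
  qed
  have bm: "bmean a i x = 0" if i: "i \<in> {1..s}" for i
  proof -
    have "of_nat (a i) / of_nat (b i) * bmean a i x = 0" using ep[OF i] mm by (simp add: epart_def)
    then show ?thesis using apos[OF i] bpos[OF i] by simp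
  qed
  have dp: "dpart a b \<sigma> x c = 0" if "c \<in> CC b s" for c
  proof -
    have "M x c = 0" using assms that by blast
    moreover have "fst c \<in> {1..s}" using that by (auto simp: CC_def)
    ultimately show ?thesis using ep[of "fst c"] mm by (simp add: MM_def)
  qed
  have ddF: "dd a x c = 0" if "c \<in> FF a s" for c
  proof -
    have "c \<in> \<sigma> ` FF b s" using that bij_betw_imp_surj_on[OF sig] by simp
    then obtain c0 where c0: "c0 \<in> FF b s" "\<sigma> c0 = c" by (elim imageE) simp
    have "c0 \<in> CC b s" using c0 FF_sub_CC by blast
    moreover have "snd c0 < b (fst c0)" using c0 by (auto simp: FF_def)
    ultimately show ?thesis using dp[of c0] c0 by (simp add: dpart_def)
  qed
  have ddC: "dd a x (i, j) = 0" if c: "(i, j) \<in> CC a s" for i j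
  proof (cases "j < a i")
    case True
    then have "(i, j) \<in> FF a s" using c by (simp add: FF_def mem_CC)
    then show ?thesis using ddF by blast
  next
    case False
    then have ja: "j = a i" and i: "i \<in> {1..s}" using c by (auto simp: mem_CC)
    have "\<forall>j'\<in>{1..<a i}. dd a x (i, j') = 0"
      using ddF i by (simp add: FF_def)
    then show ?thesis using dd_last[OF i, of x] ja by simp
  qed
  show ?thesis
  proof
    fix c assume c: "c \<in> CC a s"
    obtain i j where cij: "c = (i, j)" by force
    have "i \<in> {1..s}" using c by (simp add: cij mem_CC)
    then show "x c = 0" using ddC[of i j] c bm[of i] by (simp add: dd_def cij)
  qed
qed

lemma M_const:
  assumes "\<forall>c\<in>CC a s. x c = z"
  shows "\<forall>c\<in>CC b s. M x c = z"
proof -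
  have "(\<Sum>c\<in>CC a s. x c) = of_nat r * z" using assms by (simp add: card_CC asum)
  then have mm: "mmean a s r x = z" using rpos by (simp add: mmean_def)
  have bm: "bmean a i x = z" if i: "i \<in> {1..s}" for i
  proof -
    have "(\<Sum>j=1..a i. x (i, j)) = of_nat (a i) * z" using assms i by (simp add: mem_CC)
    then show ?thesis using apos[OF i] by (simp add: bmean_def)
  qed
  have dd0: "\<forall>c\<in>CC a s. dd a x c = 0"
  proof
    fix c assume c: "c \<in> CC a s"
    then have "fst c \<in> {1..s}" "x c = z" using assms by (auto simp: CC_def)
    then show "dd a x c = 0" using bm by (simp add: dd_def)
  qed
  show ?thesis
  proof
    fix c assume c: "c \<in> CC b s"
    then have "fst c \<in> {1..s}" by (auto simp: CC_def)
    then show "M x c = z" using dpart_zero[OF dd0 c] mm bm[of "fst c"] by (simp add: MM_def epart_def)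
  qed
qed

lemma M_cons:
  assumes "\<forall>c\<in>CC a s. \<forall>c'\<in>nb t a s c. x c' = x c"
  shows "\<forall>c\<in>CC b s. \<forall>c'\<in>nb t b s c. M x c' = M x c"
proof (cases "t = 2")
  case True
  have "(1, 1) \<in> CC a s" using one_in_CC spos by auto
  have "\<forall>c\<in>CC a s. x c = x (1, 1)"
  proof
    fix c assume c: "c \<in> CC a s"
    then have "c \<in> nb t a s (1, 1)" using True by (simp add: nb_def)
    then show "x c = x (1, 1)" using assms \<open>(1, 1) \<in> CC a s\<close> by blast
  qed
  from M_const[OF this] show ?thesis using True by (auto simp: nb_def)
next
  case F2: False
  show ?thesis
  proof (cases "t = 1")
    case True
    have "\<forall>c\<in>CC a s. dd a x c = 0"
    proof
      fix c assume c: "c \<in> CC a s"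
      obtain i j where cij: "c = (i, j)" by force
      have i: "i \<in> {1..s}" using c by (auto simp: cij mem_CC)
      have "\<forall>j'\<in>{1..a i}. x (i, j') = x (i, j)"
      proof
        fix j' assume "j' \<in> {1..a i}"
        then have "(i, j') \<in> nb t a s c" using True by (simp add: nb_def cij)
        then show "x (i, j') = x (i, j)" using assms c by (auto simp only: cij)
      qed
      then have "(\<Sum>j'=1..a i. x (i, j')) = of_nat (a i) * x (i, j)" by simp
      then show "dd a x c = 0" using apos[OF i] by (simp add: dd_def bmean_def cij)
    qed
    then show ?thesis
    proof (intro ballI)
      fix c c' assume dd0: "\<forall>c\<in>CC a s. dd a x c = 0" and c: "c \<in> CC b s" and c': "c' \<in> nb t b s c"
      then have c'': "c' \<in> CC b s" and f: "fst c' = fst c" using True by (auto simp: nb_def CC_def)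
      show "M x c' = M x c" using dpart_zero[OF dd0 c] dpart_zero[OF dd0 c''] f by (simp add: MM_def)
    qed
  next
    case False
    then show ?thesis using F2 by (simp add: nb_def)
  qed
qed

lemma M_eig:
  assumes "\<forall>c\<in>CC a s. (\<Sum>c'\<in>nb t a s c. x c') = 0"
  shows "\<forall>c\<in>CC b s. (\<Sum>c'\<in>nb t b s c. M x c') = 0"
proof (cases "t = 2")
  case True
  have "(1, 1) \<in> CC a s" using one_in_CC spos by auto
  then have "(\<Sum>c\<in>CC a s. x c) = 0" using assms True by (auto simp: nb_def)
  then show ?thesis using True total_M[of x] by (simp add: nb_def)
next
  case F2: False
  show ?thesis
  proof (cases "t = 1")
    case True
    have bs: "(\<Sum>j=1..a i. x (i, j)) = 0" if i: "i \<in> {1..s}" for i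
    proof -
      have "(\<Sum>c'\<in>{i} \<times> {1..a i}. x c') = 0" using assms one_in_CC(1)[OF i] True by (auto simp: nb_def)
      then show ?thesis by (simp add: sum_single_times)
    qed
    have "(\<Sum>c\<in>CC a s. x c) = 0" unfolding sum_CC using bs by simp
    then have mm: "mmean a s r x = 0" by (simp add: mmean_def)
    have bz: "(\<Sum>j=1..b i. M x (i, j)) = 0" if i: "i \<in> {1..s}" for i
      using block_sum_M[OF i, of x] mm bs[OF i] by (simp add: epart_def bmean_def)
    show ?thesis
    proof
      fix c assume c: "c \<in> CC b s"
      obtain i j where cij: "c = (i, j)" by force
      have i: "i \<in> {1..s}" using c by (simp add: cij mem_CC)
      have "(\<Sum>c'\<in>nb t b s c. M x c') = (\<Sum>j=1..b i. M x (i, j))"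
        using True by (simp add: nb_def cij sum_single_times)
      then show "(\<Sum>c'\<in>nb t b s c. M x c') = 0" using bz[OF i] by simp
    qed
  next
    case False
    then have "\<forall>c\<in>CC a s. x c = 0" using assms F2 by (simp add: nb_def)
    from M_const[OF this] show ?thesis using F2 False by (simp add: nb_def)
  qed
qed

end




lemma copies_simps:
  shows "verts (copies n G) = verts G \<times> {1..n}"
    and "edges (copies n G) = edges G \<times> {1..n}"
    and "j \<in> {1..n} \<Longrightarrow> src (copies n G) (e, j) = (src G e, j)"
    and "j \<in> {1..n} \<Longrightarrow> tgt (copies n G) (e, j) = (tgt G e, j)"
    and "j \<in> {1..n} \<Longrightarrow> wt (copies n G) (e, j) = wt G e"
    and "j \<in> {1..n} \<Longrightarrow> pot (copies n G) (e, j) = pot G e"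
  by (auto simp: copies_def disj_union_def)

lemma frame_simps:
  shows "verts (frame G V0 n) = (verts G \<times> {1..n}) // frame_rel G V0 n"
    and "edges (frame G V0 n) = edges G \<times> {1..n}"
    and "j \<in> {1..n} \<Longrightarrow> src (frame G V0 n) (e, j) = frame_rel G V0 n `` {(src G e, j)}"
    and "j \<in> {1..n} \<Longrightarrow> tgt (frame G V0 n) (e, j) = frame_rel G V0 n `` {(tgt G e, j)}"
    and "j \<in> {1..n} \<Longrightarrow> wt (frame G V0 n) (e, j) = wt G e"
    and "j \<in> {1..n} \<Longrightarrow> pot (frame G V0 n) (e, j) = pot G e"
  by (auto simp: frame_def contract_def copies_simps)

lemma frame_class:
  assumes "V0 \<subseteq> verts G" "v \<in> verts G" "j \<in> {1..n}"
  shows "frame_rel G V0 n `` {(v, j)} = (if v \<in> V0 then {v} \<times> {1..n} else {(v, j)})"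
  using assms by (auto simp: frame_rel_def)

definition LG :: "('v, 'e) mgraph \<Rightarrow> complex \<Rightarrow> ('v \<Rightarrow> complex) \<Rightarrow> 'v \<Rightarrow> complex" where
  "LG G \<mu> u v = u v - complex_of_real (1 / wdeg G v) *
      (\<Sum>e\<in>out_edges G v. complex_of_real (wt G e) * cis (pot G e) * u (tgt G e)) - \<mu> * u v"

locale gl =
  fixes G :: "('v, 'e) mgraph" and V0 V1 :: "'v set" and A :: "nat multiset"
  assumes mg: "magnetic_graph G" and V0V: "V0 \<subseteq> verts G" and V10: "V1 \<subseteq> V0"
    and A0: "0 \<notin># A"
begin

definition "as = sorted_list_of_multiset A"
definition "s = length as"
definition "a i = as ! (i - 1)"
definition "r = sum_list as"
definition "FU = frame_union G V0 A"
definition "H = contracted_union G V0 V1 A"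
definition "phi = (\<lambda>(v, i, j). (frame_rel G V0 (a i) `` {(v, j)}, i))"
definition "Phi x = contr_rel FU V1 `` {phi x}"
definition "vtyp v = (if v \<in> V1 then 2 else if v \<in> V0 then 1 else (0::nat))"

abbreviation "V \<equiv> verts G"
abbreviation "E \<equiv> edges G"

lemma mset_as: "mset as = A"
  by (simp add: as_def)

lemma s_size: "s = size A"
  by (metis mset_as size_mset s_def)

lemma r_sum: "r = sum_mset A"
  by (metis mset_as sum_mset_sum_list r_def)

lemma a_pos: "i \<in> {1..s} \<Longrightarrow> a i > 0"
proof -
  assume i: "i \<in> {1..s}"
  then have "as ! (i - 1) \<in> set as" by (auto simp: s_def)
  then have "as ! (i - 1) \<in># mset as" by simp
  then have "a i \<in># A" by (simp add: a_def mset_as)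
  then show ?thesis using A0 by (cases "a i") auto
qed

lemma sum_a: "(\<Sum>i=1..s. a i) = r"
proof -
  have "r = (\<Sum>i<s. as ! i)" by (simp add: r_def s_def sum_list_sum_nth atLeast0LessThan)
  also have "\<dots> = (\<Sum>i=1..s. a i)"
    by (rule sum.reindex_bij_witness[of _ "\<lambda>i. i - 1" Suc]) (auto simp: a_def)
  finally show ?thesis by simp
qed

lemma sum_map_a: "(\<Sum>i=1..s. f (a i)) = (\<Sum>x\<in>#A. f x)"
proof -
  have "(\<Sum>x\<in>#mset as. f x) = sum_list (map f as)" by (metis mset_map sum_mset_sum_list)
  then have "(\<Sum>x\<in>#A. f x) = sum_list (map f as)" by (simp add: mset_as)
  also have "\<dots> = (\<Sum>i<s. f (as ! i))" by (simp add: s_def sum_list_sum_nth atLeast0LessThan)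
  also have "\<dots> = (\<Sum>i=1..s. f (a i))"
    by (rule sum.reindex_bij_witness[of _ "\<lambda>i. i - 1" Suc]) (auto simp: a_def)
  finally show ?thesis by simp
qed

lemma FU_nth: "i \<in> {1..s} \<Longrightarrow> map (frame G V0) as ! (i - 1) = frame G V0 (a i)"
  by (auto simp: s_def a_def)

lemma FU_simps:
  shows "verts FU = (\<Union>i\<in>{1..s}. verts (frame G V0 (a i)) \<times> {i})"
    and "edges FU = (\<Union>i\<in>{1..s}. (E \<times> {1..a i}) \<times> {i})"
    and "i \<in> {1..s} \<Longrightarrow> src FU ((e, j), i) = (src (frame G V0 (a i)) (e, j), i)"
    and "i \<in> {1..s} \<Longrightarrow> tgt FU ((e, j), i) = (tgt (frame G V0 (a i)) (e, j), i)"
    and "i \<in> {1..s} \<Longrightarrow> wt FU ((e, j), i) = wt (frame G V0 (a i)) (e, j)"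
    and "i \<in> {1..s} \<Longrightarrow> pot FU ((e, j), i) = pot (frame G V0 (a i)) (e, j)"
  by (auto simp: FU_def frame_union_def disj_union_def FU_nth frame_simps
      simp flip: s_def as_def)

lemma mgE: "e \<in> E \<Longrightarrow> src G e \<in> V \<and> tgt G e \<in> V \<and> inve G e \<in> E \<and> inve G (inve G e) = e
   \<and> wt G e > 0 \<and> src G (inve G e) = tgt G e \<and> tgt G (inve G e) = src G e"
  using mg unfolding magnetic_graph_def by blast

lemma finV: "finite V" and finE: "finite E"
  using mg unfolding magnetic_graph_def by auto

lemma out_ne: "v \<in> V \<Longrightarrow> out_edges G v \<noteq> {}"
  using mg unfolding magnetic_graph_def by auto

lemma fin_out: "finite (out_edges G v)"
  using finE by (simp add: out_edges_def)

lemma wdeg_pos: "v \<in> V \<Longrightarrow> wdeg G v > 0"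
  unfolding wdeg_def
  by (rule sum_pos[OF fin_out out_ne]) (auto simp: out_edges_def mgE)

lemma fst_phi: "v \<in> V \<Longrightarrow> (i, j) \<in> CC a s \<Longrightarrow>
    fst (phi (v, i, j)) = (if v \<in> V0 then {v} \<times> {1..a i} else {(v, j)})"
  by (simp add: phi_def frame_class[OF V0V] mem_CC)

lemma snd_phi: "snd (phi (v, i, j)) = i"
  by (simp add: phi_def)

lemma times_single_eq: "S \<noteq> {} \<Longrightarrow> ({x} \<times> S = {y} \<times> S) \<longleftrightarrow> x = y"
  by auto

lemma phi_eq:
  assumes "v \<in> V" "(i, j) \<in> CC a s" "v' \<in> V" "(i', j') \<in> CC a s"
  shows "phi (v', i', j') = phi (v, i, j) \<longleftrightarrow> v' = v \<and> i' = i \<and> (v \<in> V0 \<or> j' = j)"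
proof -
  have ai: "a i > 0" using assms a_pos by (auto simp: mem_CC)
  then have ne: "{1..a i} \<noteq> {}" by auto
  have "phi (v', i', j') = phi (v, i, j) \<longleftrightarrow> fst (phi (v', i', j')) = fst (phi (v, i, j)) \<and> i' = i"
    by (simp add: prod_eq_iff snd_phi)
  also have "\<dots> \<longleftrightarrow> v' = v \<and> i' = i \<and> (v \<in> V0 \<or> j' = j)"
  proof (cases "i' = i")
    case True
    show ?thesis
    proof (cases "v \<in> V0")
      case v0: True
      show ?thesis
      proof (cases "v' \<in> V0")
        case True
        then show ?thesis using v0 \<open>i' = i\<close> assms times_single_eq[OF ne] by (simp add: fst_phi)
      next
        case False
        have ne: "{(v', j')} \<noteq> {v} \<times> {1..a i}"
        proof
          assume "{(v', j')} = {v} \<times> {1..a i}"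
          then have "(v', j') \<in> {v} \<times> {1..a i}" by (metis singletonI)
          then show False using False v0 by auto
        qed
        have "v' \<noteq> v" using False v0 by auto
        then show ?thesis using False v0 \<open>i' = i\<close> assms ne by (simp add: fst_phi)
      qed
    next
      case nv0: False
      show ?thesis
      proof (cases "v' \<in> V0")
        case True
        have ne: "{v'} \<times> {1..a i} \<noteq> {(v, j)}"
        proof
          assume "{v'} \<times> {1..a i} = {(v, j)}"
          then have "(v, j) \<in> {v'} \<times> {1..a i}" by (metis singletonI)
          then show False using True nv0 by auto
        qed
        have "v' \<noteq> v" using True nv0 by auto
        then show ?thesis using True nv0 \<open>i' = i\<close> assms ne by (simp add: fst_phi)
      next
        case False
        then show ?thesis using nv0 \<open>i' = i\<close> assms by (auto simp: fst_phi)
      qed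
    qed
  next
    case False
    then show ?thesis by simp
  qed
  finally show ?thesis .
qed

lemma verts_FU: "verts FU = phi ` (V \<times> CC a s)"
proof -
  have "verts FU = (\<Union>i\<in>{1..s}. ((V \<times> {1..a i}) // frame_rel G V0 (a i)) \<times> {i})"
    by (simp add: FU_simps frame_simps)
  also have "\<dots> = phi ` (V \<times> CC a s)"
  proof (intro equalityI subsetI)
    fix x assume "x \<in> (\<Union>i\<in>{1..s}. ((V \<times> {1..a i}) // frame_rel G V0 (a i)) \<times> {i})"
    then obtain i v j where ivj: "i \<in> {1..s}" "v \<in> V" "j \<in> {1..a i}"
      "x = (frame_rel G V0 (a i) `` {(v, j)}, i)" unfolding quotient_def by blast
    then have "x = phi (v, i, j)" "(v, i, j) \<in> V \<times> CC a s" by (auto simp: phi_def mem_CC)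
    then show "x \<in> phi ` (V \<times> CC a s)" by blast
  next
    fix x assume "x \<in> phi ` (V \<times> CC a s)"
    then obtain v i j where ivj: "i \<in> {1..s}" "v \<in> V" "j \<in> {1..a i}" "x = phi (v, i, j)"
      by (auto simp: mem_CC)
    then have "frame_rel G V0 (a i) `` {(v, j)} \<in> (V \<times> {1..a i}) // frame_rel G V0 (a i)"
      unfolding quotient_def by blast
    then show "x \<in> (\<Union>i\<in>{1..s}. ((V \<times> {1..a i}) // frame_rel G V0 (a i)) \<times> {i})"
      using ivj by (auto simp: phi_def)
  qed
  finally show ?thesis .
qed

lemma v1_in_phi:
  assumes "v1 \<in> V1" "v \<in> V" "(i, j) \<in> CC a s"
  shows "(v1, 1) \<in> fst (phi (v, i, j)) \<longleftrightarrow> v = v1"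
proof -
  have "a i > 0" using assms a_pos by (auto simp: mem_CC)
  then show ?thesis using assms V10 by (auto simp: fst_phi)
qed

lemma H_eq: "H = contract FU (contr_rel FU V1)"
  by (simp add: H_def contracted_union_def FU_def Let_def)

lemma Phi_mem:
  assumes "v \<in> V" "c \<in> CC a s"
  shows "y \<in> Phi (v, c) \<longleftrightarrow> (\<exists>v' c'. v' \<in> V \<and> c' \<in> CC a s \<and> y = phi (v', c') \<and>
      (phi (v', c') = phi (v, c) \<or> (v \<in> V1 \<and> v' = v)))"
proof -
  obtain i j where c: "c = (i, j)" by force
  have pin: "phi (v, c) \<in> verts FU" using assms by (simp add: verts_FU)
  have "y \<in> Phi (v, c) \<longleftrightarrow> y \<in> verts FU \<and> (phi (v, c) = y \<or> (\<exists>v1\<in>V1. (v1, 1) \<in> fst (phi (v, c)) \<and> (v1, 1) \<in> fst y))"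
    using pin by (simp add: Phi_def contr_rel_def)
  also have "\<dots> \<longleftrightarrow> (\<exists>v' c'. v' \<in> V \<and> c' \<in> CC a s \<and> y = phi (v', c') \<and>
      (phi (v', c') = phi (v, c) \<or> (v \<in> V1 \<and> v' = v)))"
  proof
    assume L: "y \<in> verts FU \<and> (phi (v, c) = y \<or> (\<exists>v1\<in>V1. (v1, 1) \<in> fst (phi (v, c)) \<and> (v1, 1) \<in> fst y))"
    then obtain v' c' where y: "v' \<in> V" "c' \<in> CC a s" "y = phi (v', c')" by (auto simp: verts_FU)
    obtain i' j' where c': "c' = (i', j')" by force
    show "\<exists>v' c'. v' \<in> V \<and> c' \<in> CC a s \<and> y = phi (v', c') \<and>
      (phi (v', c') = phi (v, c) \<or> (v \<in> V1 \<and> v' = v))"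
    proof (cases "phi (v, c) = y")
      case True
      then have "phi (v', c') = phi (v, c)" using y by simp
      then show ?thesis using y by blast
    next
      case False
      then obtain v1 where "v1 \<in> V1" "(v1, 1) \<in> fst (phi (v, c))" "(v1, 1) \<in> fst y" using L by auto
      then have "v = v1" "v' = v1" using v1_in_phi assms y by (auto simp: c c')
      then show ?thesis using y \<open>v1 \<in> V1\<close> by blast
    qed
  next
    assume R: "\<exists>v' c'. v' \<in> V \<and> c' \<in> CC a s \<and> y = phi (v', c') \<and>
      (phi (v', c') = phi (v, c) \<or> (v \<in> V1 \<and> v' = v))"
    then obtain v' c' where y: "v' \<in> V" "c' \<in> CC a s" "y = phi (v', c')"
        and o: "phi (v', c') = phi (v, c) \<or> (v \<in> V1 \<and> v' = v)" by blast
    obtain i' j' where c': "c' = (i', j')" by force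
    have yin: "y \<in> verts FU" using y by (auto simp: verts_FU)
    show "y \<in> verts FU \<and> (phi (v, c) = y \<or> (\<exists>v1\<in>V1. (v1, 1) \<in> fst (phi (v, c)) \<and> (v1, 1) \<in> fst y))"
    proof (cases "phi (v', c') = phi (v, c)")
      case True
      then show ?thesis using yin y by auto
    next
      case False
      then have "v \<in> V1" "v' = v" using o by auto
      then have "(v, 1) \<in> fst (phi (v, c))" "(v, 1) \<in> fst y"
        using v1_in_phi assms y by (auto simp: c c')
      then show ?thesis using yin \<open>v \<in> V1\<close> by blast
    qed
  qed
  finally show ?thesis .
qed

lemma nb_sub: "c \<in> CC a s \<Longrightarrow> nb t a s c \<subseteq> CC a s"
  by (auto simp: nb_def CC_def)

lemma nb_self: "c \<in> CC a s \<Longrightarrow> c \<in> nb t a s c"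
  by (auto simp: nb_def CC_def)

lemma Phi_V1: "v \<in> V1 \<Longrightarrow> c \<in> CC a s \<Longrightarrow> Phi (v, c) = phi ` ({v} \<times> CC a s)"
proof -
  assume v: "v \<in> V1" and c: "c \<in> CC a s"
  then have vV: "v \<in> V" using V10 V0V by auto
  show ?thesis
  proof (intro equalityI subsetI)
    fix y assume "y \<in> Phi (v, c)"
    then obtain v' c' where y: "v' \<in> V" "c' \<in> CC a s" "y = phi (v', c')"
      and o: "phi (v', c') = phi (v, c) \<or> v' = v" using Phi_mem[OF vV c] v by blast
    show "y \<in> phi ` ({v} \<times> CC a s)"
    proof (cases "v' = v")
      case True then show ?thesis using y by blast
    next
      case False then have "y = phi (v, c)" using o y by simp
      then show ?thesis using c by blast
    qed
  next
    fix y assume "y \<in> phi ` ({v} \<times> CC a s)"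
    then obtain c' where "c' \<in> CC a s" "y = phi (v, c')" by blast
    then show "y \<in> Phi (v, c)" using Phi_mem[OF vV c] v vV by blast
  qed
qed

lemma Phi_nV1: "v \<in> V \<Longrightarrow> v \<notin> V1 \<Longrightarrow> c \<in> CC a s \<Longrightarrow> Phi (v, c) = {phi (v, c)}"
proof -
  assume vV: "v \<in> V" and v: "v \<notin> V1" and c: "c \<in> CC a s"
  show ?thesis
  proof (intro equalityI subsetI)
    fix y assume "y \<in> Phi (v, c)"
    then obtain v' c' where y: "v' \<in> V" "c' \<in> CC a s" "y = phi (v', c')"
      and o: "phi (v', c') = phi (v, c)" using Phi_mem[OF vV c] v by blast
    then show "y \<in> {phi (v, c)}" by simp
  next
    fix y assume "y \<in> {phi (v, c)}"
    then show "y \<in> Phi (v, c)" using Phi_mem[OF vV c] vV c by blast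
  qed
qed

lemma phi_eqV: "v \<in> V \<Longrightarrow> c \<in> CC a s \<Longrightarrow> v' \<in> V \<Longrightarrow> c' \<in> CC a s \<Longrightarrow> phi (v', c') = phi (v, c) \<Longrightarrow> v' = v"
  using phi_eq by (metis prod.collapse)

lemma phi_in_Phi: assumes "v \<in> V" "c \<in> CC a s" shows "phi (v, c) \<in> Phi (v, c)"
  unfolding Phi_mem[OF assms] using assms by (intro exI[of _ v] exI[of _ c]) simp

lemma Phi_eq:
  assumes "v \<in> V" "c \<in> CC a s" "v' \<in> V" "c' \<in> CC a s"
  shows "Phi (v', c') = Phi (v, c) \<longleftrightarrow> v' = v \<and> c' \<in> nb (vtyp v) a s c"
proof (cases "v \<in> V1")
  case True
  show ?thesis
  proof (cases "v' \<in> V1")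
    case True
    have "v' = v" if eq: "Phi (v', c') = Phi (v, c)"
    proof -
      have "phi (v', c') \<in> Phi (v, c)" using phi_in_Phi[OF assms(3,4)] eq by simp
      then have "phi (v', c') \<in> phi ` ({v} \<times> CC a s)" using Phi_V1[OF \<open>v \<in> V1\<close> assms(2)] by simp
      then obtain d where d: "d \<in> CC a s" "phi (v', c') = phi (v, d)" by auto
      show ?thesis using phi_eqV[OF assms(1) d(1) assms(3,4) d(2)] .
    qed
    moreover have "Phi (v, c') = Phi (v, c)"
      using Phi_V1 \<open>v \<in> V1\<close> assms by simp
    moreover have "c' \<in> nb (vtyp v) a s c" using \<open>v \<in> V1\<close> assms by (simp add: vtyp_def nb_def)
    ultimately show ?thesis by blast
  next
    case False
    have "Phi (v', c') \<noteq> Phi (v, c)"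
    proof
      assume eq: "Phi (v', c') = Phi (v, c)"
      have "phi (v, c) \<in> Phi (v', c')" using phi_in_Phi[OF assms(1,2)] eq by simp
      then have "phi (v, c) = phi (v', c')" using Phi_nV1[OF assms(3) False assms(4)] by simp
      then have "v = v'" using phi_eqV[OF assms(3,4) assms(1,2)] by simp
      then show False using False True by simp
    qed
    then show ?thesis using False True by auto
  qed
next
  case nv1: False
  show ?thesis
  proof (cases "v' \<in> V1")
    case True
    have "Phi (v', c') \<noteq> Phi (v, c)"
    proof
      assume eq: "Phi (v', c') = Phi (v, c)"
      have "phi (v', c') \<in> Phi (v, c)" using phi_in_Phi[OF assms(3,4)] eq by simp
      then have "phi (v', c') = phi (v, c)" using Phi_nV1[OF assms(1) nv1 assms(2)] by simp
      then have "v' = v" using phi_eqV[OF assms(1,2) assms(3,4)] by simp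
      then show False using nv1 True by simp
    qed
    then show ?thesis using nv1 True by auto
  next
    case False
    obtain i j where c: "c = (i, j)" by force
    obtain i' j' where c': "c' = (i', j')" by force
    have "Phi (v', c') = Phi (v, c) \<longleftrightarrow> phi (v', c') = phi (v, c)"
      using Phi_nV1 assms False nv1 by simp
    also have "\<dots> \<longleftrightarrow> v' = v \<and> i' = i \<and> (v \<in> V0 \<or> j' = j)"
      using phi_eq assms by (simp add: c c')
    also have "\<dots> \<longleftrightarrow> v' = v \<and> c' \<in> nb (vtyp v) a s c"
      using nv1 assms by (auto simp: vtyp_def nb_def c c' mem_CC)
    finally show ?thesis .
  qed
qed

lemma H_simps:
  shows "verts H = verts FU // contr_rel FU V1"
    and "edges H = edges FU"
    and "src H e = contr_rel FU V1 `` {src FU e}"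
    and "tgt H e = contr_rel FU V1 `` {tgt FU e}"
    and "wt H e = wt FU e"
    and "pot H e = pot FU e"
  by (simp_all add: H_eq contract_def)

lemma verts_H: "verts H = Phi ` (V \<times> CC a s)"
proof -
  have "verts H = (\<Union>x\<in>phi ` (V \<times> CC a s). {contr_rel FU V1 `` {x}})"
    by (simp add: H_simps quotient_def verts_FU)
  also have "\<dots> = Phi ` (V \<times> CC a s)"
    by (auto simp: Phi_def)
  finally show ?thesis .
qed

lemma edges_H: "((e, j), i) \<in> edges H \<longleftrightarrow> e \<in> E \<and> (i, j) \<in> CC a s"
  by (auto simp: H_simps FU_simps mem_CC)

lemma edge_H_cases: "x \<in> edges H \<Longrightarrow> \<exists>e i j. x = ((e, j), i) \<and> e \<in> E \<and> (i, j) \<in> CC a s"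
  using edges_H by (metis prod.collapse)

lemma src_H: "e \<in> E \<Longrightarrow> (i, j) \<in> CC a s \<Longrightarrow> src H ((e, j), i) = Phi (src G e, i, j)"
  by (simp add: H_simps FU_simps frame_simps mem_CC Phi_def phi_def)

lemma tgt_H: "e \<in> E \<Longrightarrow> (i, j) \<in> CC a s \<Longrightarrow> tgt H ((e, j), i) = Phi (tgt G e, i, j)"
  by (simp add: H_simps FU_simps frame_simps mem_CC Phi_def phi_def)

lemma wt_H: "e \<in> E \<Longrightarrow> (i, j) \<in> CC a s \<Longrightarrow> wt H ((e, j), i) = wt G e"
  by (simp add: H_simps FU_simps frame_simps mem_CC)

lemma pot_H: "e \<in> E \<Longrightarrow> (i, j) \<in> CC a s \<Longrightarrow> pot H ((e, j), i) = pot G e"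
  by (simp add: H_simps FU_simps frame_simps mem_CC)

definition "emap = (\<lambda>(e, i, j). ((e, j), i))"

lemma emap_inj: "inj emap"
  by (auto simp: inj_def emap_def)

lemma out_H:
  assumes v: "v \<in> V" and c: "c \<in> CC a s"
  shows "out_edges H (Phi (v, c)) = emap ` (out_edges G v \<times> nb (vtyp v) a s c)"
proof (intro equalityI subsetI)
  fix x assume x: "x \<in> out_edges H (Phi (v, c))"
  then have xH: "x \<in> edges H" by (simp add: out_edges_def)
  obtain e i j where xe: "x = ((e, j), i)" "e \<in> E" "(i, j) \<in> CC a s"
    using edge_H_cases[OF xH] by blast
  have "Phi (src G e, i, j) = Phi (v, c)" using x xe src_H by (simp add: out_edges_def)
  then have "src G e = v" "(i, j) \<in> nb (vtyp v) a s c"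
    using Phi_eq[OF v c, of "src G e" "(i, j)"] mgE[OF xe(2)] xe by auto
  then have "(e, i, j) \<in> out_edges G v \<times> nb (vtyp v) a s c"
    using xe by (simp add: out_edges_def)
  moreover have "x = emap (e, i, j)" by (simp add: xe emap_def)
  ultimately show "x \<in> emap ` (out_edges G v \<times> nb (vtyp v) a s c)" by blast
next
  fix x assume "x \<in> emap ` (out_edges G v \<times> nb (vtyp v) a s c)"
  then obtain e i j where e: "e \<in> out_edges G v" and n: "(i, j) \<in> nb (vtyp v) a s c"
      and x: "x = ((e, j), i)" by (auto simp: emap_def)
  have ij: "(i, j) \<in> CC a s" using n nb_sub[OF c] by blast
  have eE: "e \<in> E" "src G e = v" using e by (auto simp: out_edges_def)
  have pe: "Phi (v, i, j) = Phi (v, c)" using Phi_eq[OF v c v ij] n by simp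
  have "((e, j), i) \<in> edges H" using eE ij by (simp add: edges_H)
  moreover have "src H ((e, j), i) = Phi (v, c)" using src_H[OF eE(1) ij] eE(2) pe by simp
  ultimately show "x \<in> out_edges H (Phi (v, c))"
    by (simp add: out_edges_def x)
qed

lemma sum_out_H:
  assumes v: "v \<in> V" and c: "c \<in> CC a s"
  shows "(\<Sum>x\<in>out_edges H (Phi (v, c)). F x) =
         (\<Sum>c'\<in>nb (vtyp v) a s c. \<Sum>e\<in>out_edges G v. F ((e, snd c'), fst c'))"
proof -
  have "(\<Sum>x\<in>out_edges H (Phi (v, c)). F x) = (\<Sum>y\<in>out_edges G v \<times> nb (vtyp v) a s c. F (emap y))"
    unfolding out_H[OF v c] sum.reindex[OF inj_on_subset[OF emap_inj subset_UNIV]] by (simp add: comp_def)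
  also have "\<dots> = (\<Sum>e\<in>out_edges G v. \<Sum>c'\<in>nb (vtyp v) a s c. F ((e, snd c'), fst c'))"
  proof -
    have "(\<Sum>y\<in>out_edges G v \<times> nb (vtyp v) a s c. F (emap y)) =
        (\<Sum>(e, c')\<in>out_edges G v \<times> nb (vtyp v) a s c. F ((e, snd c'), fst c'))"
      by (rule sum.cong) (auto simp: emap_def)
    also have "\<dots> = (\<Sum>e\<in>out_edges G v. \<Sum>c'\<in>nb (vtyp v) a s c. F ((e, snd c'), fst c'))"
      by (rule sum.cartesian_product[symmetric])
    finally show ?thesis .
  qed
  also have "\<dots> = (\<Sum>c'\<in>nb (vtyp v) a s c. \<Sum>e\<in>out_edges G v. F ((e, snd c'), fst c'))"
    by (rule sum.swap)
  finally show ?thesis .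
qed

lemma fin_nb: "c \<in> CC a s \<Longrightarrow> finite (nb t a s c)"
  using nb_sub finite_CC by (rule finite_subset)

lemma card_nb_pos: "c \<in> CC a s \<Longrightarrow> card (nb t a s c) > 0"
  using fin_nb nb_self by (metis card_gt_0_iff empty_iff)

lemma wdeg_H:
  assumes v: "v \<in> V" and c: "c \<in> CC a s"
  shows "wdeg H (Phi (v, c)) = real (card (nb (vtyp v) a s c)) * wdeg G v"
proof -
  have "wdeg H (Phi (v, c)) = (\<Sum>c'\<in>nb (vtyp v) a s c. \<Sum>e\<in>out_edges G v. wt H ((e, snd c'), fst c'))"
    unfolding wdeg_def by (rule sum_out_H[OF v c])
  also have "\<dots> = (\<Sum>c'\<in>nb (vtyp v) a s c. wdeg G v)"
  proof (rule sum.cong[OF refl])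
    fix c' assume "c' \<in> nb (vtyp v) a s c"
    then have c': "(fst c', snd c') \<in> CC a s" using nb_sub[OF c] by auto
    show "(\<Sum>e\<in>out_edges G v. wt H ((e, snd c'), fst c')) = wdeg G v"
      unfolding wdeg_def by (rule sum.cong[OF refl]) (simp add: wt_H[OF _ c'] out_edges_def)
  qed
  also have "\<dots> = real (card (nb (vtyp v) a s c)) * wdeg G v" by simp
  finally show ?thesis .
qed

lemma lap_H:
  assumes v: "v \<in> V" and c: "c \<in> CC a s"
  shows "mag_laplacian H f (Phi (v, c)) - \<mu> * f (Phi (v, c)) =
    (1 / of_nat (card (nb (vtyp v) a s c))) * (\<Sum>c'\<in>nb (vtyp v) a s c. LG G \<mu> (\<lambda>w. f (Phi (w, c'))) v)"
proof -
  define N where "N = nb (vtyp v) a s c"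
  define n where "n = card N"
  define d where "d = wdeg G v"
  define f0 where "f0 = f (Phi (v, c))"
  define S where "S c' = (\<Sum>e\<in>out_edges G v. complex_of_real (wt G e) * cis (pot G e) * f (Phi (tgt G e, fst c', snd c')))" for c'
  have npos: "n > 0" using card_nb_pos[OF c] by (simp add: n_def N_def)
  have dpos: "d > 0" using wdeg_pos[OF v] by (simp add: d_def)
  have NC: "\<And>c'. c' \<in> N \<Longrightarrow> (fst c', snd c') \<in> CC a s" using nb_sub[OF c] by (auto simp: N_def)
  have sumH: "(\<Sum>x\<in>out_edges H (Phi (v, c)). complex_of_real (wt H x) * cis (pot H x) * f (tgt H x)) = (\<Sum>c'\<in>N. S c')"
    unfolding sum_out_H[OF v c] N_def[symmetric]
  proof (rule sum.cong[OF refl])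
    fix c' assume c': "c' \<in> N"
    show "(\<Sum>e\<in>out_edges G v. complex_of_real (wt H ((e, snd c'), fst c')) * cis (pot H ((e, snd c'), fst c')) *
          f (tgt H ((e, snd c'), fst c'))) = S c'"
    proof -
      obtain i j where ij: "c' = (i, j)" by force
      have ijC: "(i, j) \<in> CC a s" using NC[OF c'] by (simp add: ij)
      show ?thesis
        unfolding S_def ij by (rule sum.cong[OF refl]) (simp add: wt_H[OF _ ijC] pot_H[OF _ ijC] tgt_H[OF _ ijC] out_edges_def)
    qed
  qed
  have feq: "\<And>c'. c' \<in> N \<Longrightarrow> f (Phi (v, c')) = f0"
  proof -
    fix c' assume c': "c' \<in> N"
    then have "c' \<in> CC a s" using NC by simp
    then have "Phi (v, c') = Phi (v, c)" using Phi_eq[OF v c v] c' by (simp add: N_def)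
    then show "f (Phi (v, c')) = f0" by (simp add: f0_def)
  qed
  have "(\<Sum>c'\<in>N. LG G \<mu> (\<lambda>w. f (Phi (w, c'))) v) = (\<Sum>c'\<in>N. f0 - complex_of_real (1 / d) * S c' - \<mu> * f0)"
    by (rule sum.cong[OF refl]) (simp add: LG_def feq S_def d_def)
  also have "\<dots> = of_nat n * f0 - complex_of_real (1 / d) * (\<Sum>c'\<in>N. S c') - of_nat n * \<mu> * f0"
    by (simp add: sum_subtractf sum_distrib_left n_def)
  finally have R: "(\<Sum>c'\<in>N. LG G \<mu> (\<lambda>w. f (Phi (w, c'))) v) = \<dots>" .
  have L: "mag_laplacian H f (Phi (v, c)) - \<mu> * f (Phi (v, c)) =
      f0 - complex_of_real (1 / (real n * d)) * (\<Sum>c'\<in>N. S c') - \<mu> * f0"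
    unfolding mag_laplacian_def wdeg_H[OF v c] sumH
    by (simp add: f0_def n_def N_def d_def)
  show ?thesis
    unfolding N_def[symmetric] n_def[symmetric] R L using npos dpos
    by (simp add: field_simps)
qed

lemma card_FF: "card (FF a s) + s = r"
proof -
  have "card (FF a s) = (\<Sum>i=1..s. a i - 1)" by (simp add: FF_def)
  moreover have "(\<Sum>i=1..s. a i - 1) + s = (\<Sum>i=1..s. (a i - 1) + 1)" by (simp add: sum.distrib)
  moreover have "\<dots> = (\<Sum>i=1..s. a i)"
  proof (rule sum.cong[OF refl])
    fix i assume "i \<in> {1..s}"
    then have "a i > 0" by (rule a_pos)
    then show "a i - 1 + 1 = a i" by simp
  qed
  ultimately show ?thesis using sum_a by simp
qed

end




definition eigset :: "('v, 'e) mgraph \<Rightarrow> complex \<Rightarrow> nat set" where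
  "eigset K \<mu> = {n. \<exists>f. (\<forall>i<n. is_eigenfunction K \<mu> (f i)) \<and> lin_indep_fam n f}"

lemma LG_cong:
  assumes "magnetic_graph G" "\<forall>w\<in>verts G. u w = u' w" "v \<in> verts G"
  shows "LG G \<mu> u v = LG G \<mu> u' v"
proof -
  have "\<And>e. e \<in> out_edges G v \<Longrightarrow> tgt G e \<in> verts G"
    using assms(1) unfolding magnetic_graph_def out_edges_def by blast
  then have "(\<Sum>e\<in>out_edges G v. complex_of_real (wt G e) * cis (pot G e) * u (tgt G e)) =
             (\<Sum>e\<in>out_edges G v. complex_of_real (wt G e) * cis (pot G e) * u' (tgt G e))"
    using assms(2) by (intro sum.cong) auto
  then show ?thesis using assms by (simp add: LG_def)
qed

lemma LG_MM:
  assumes "finite (out_edges G v)"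
  shows "LG G \<mu> (\<lambda>w. MM a b s r \<sigma> (X w) c') v = MM a b s r \<sigma> (\<lambda>c0. LG G \<mu> (\<lambda>w. X w c0) v) c'"
  unfolding LG_def
  by (simp add: MM_diff MM_scale MM_div MM_sum[OF assms] mult.assoc)

lemma mag_lin:
  "mag_laplacian K (\<lambda>y. \<Sum>k<n. \<alpha> k * F k y) v = (\<Sum>k<n. \<alpha> k * mag_laplacian K (F k) v)"
  unfolding mag_laplacian_def
  by (simp add: sum_subtractf sum_distrib_left algebra_simps sum.swap[of _ "{..<n}"])

lemma eig_lincomb:
  assumes "\<forall>k<n. is_eigenfunction K \<mu> (F k)"
  shows "is_eigenfunction K \<mu> (\<lambda>y. \<Sum>k<n. \<alpha> k * F k y)"
  using assms unfolding is_eigenfunction_def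
  by (auto simp: mag_lin sum_distrib_left algebra_simps)

locale gl2 = PA: gl G V0 V1 A + PB: gl G V0 V1 B
  for G :: "('v, 'e) mgraph" and V0 V1 :: "'v set" and A B :: "nat multiset" +
  assumes same_s: "size A = size B" and same_r: "sum_mset A = sum_mset B" and rpos: "sum_mset A > 0"
begin

abbreviation "V \<equiv> verts G"

lemma sB: "PB.s = PA.s" using same_s by (simp add: PA.s_size PB.s_size)
lemma rB: "PB.r = PA.r" using same_r by (simp add: PA.r_sum PB.r_sum)

definition "sig = (SOME \<sigma>. bij_betw \<sigma> (FF PB.a PA.s) (FF PA.a PA.s))"

lemma sig_bij: "bij_betw sig (FF PB.a PA.s) (FF PA.a PA.s)"
proof -
  have "card (FF PB.a PA.s) = card (FF PA.a PA.s)"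
    using PA.card_FF PB.card_FF sB rB by simp
  moreover have "finite (FF PB.a PA.s)" "finite (FF PA.a PA.s)"
    using FF_sub_CC finite_CC finite_subset by blast+
  ultimately have "\<exists>\<sigma>. bij_betw \<sigma> (FF PB.a PA.s) (FF PA.a PA.s)"
    using finite_same_card_bij by blast
  then show ?thesis unfolding sig_def by (rule someI_ex)
qed

lemma mdl_ok: "mdl PA.a PB.a PA.s PA.r sig"
proof
  show "\<And>i. i \<in> {1..PA.s} \<Longrightarrow> 0 < PA.a i" by (rule PA.a_pos)
  show "\<And>i. i \<in> {1..PA.s} \<Longrightarrow> 0 < PB.a i" using PB.a_pos sB by simp
  show "sum PA.a {1..PA.s} = PA.r" by (rule PA.sum_a)
  show "sum PB.a {1..PA.s} = PA.r" using PB.sum_a sB rB by simp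
  show "bij_betw sig (FF PB.a PA.s) (FF PA.a PA.s)" by (rule sig_bij)
  show "0 < PA.r" using rpos by (simp add: PA.r_sum)
qed

abbreviation "M \<equiv> MM PA.a PB.a PA.s PA.r sig"

definition "rep y = (SOME p. fst p \<in> V \<and> snd p \<in> CC PB.a PA.s \<and> PB.Phi p = y)"

definition "xv f v = (\<lambda>c0. f (PA.Phi (v, c0)))"

definition "Tr f y = (if y \<in> verts PB.H then M (xv f (fst (rep y))) (snd (rep y)) else 0)"

lemma vtyp_eq: "PB.vtyp = PA.vtyp"
  by (simp add: PA.vtyp_def PB.vtyp_def fun_eq_iff)

lemma xv_cons:
  assumes v: "v \<in> V"
  shows "\<forall>c\<in>CC PA.a PA.s. \<forall>c'\<in>nb (PA.vtyp v) PA.a PA.s c. xv f v c' = xv f v c"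
proof (intro ballI)
  fix c c' assume c: "c \<in> CC PA.a PA.s" and c': "c' \<in> nb (PA.vtyp v) PA.a PA.s c"
  have "c' \<in> CC PA.a PA.s" using PA.nb_sub[OF c] c' by blast
  then have "PA.Phi (v, c') = PA.Phi (v, c)" using PA.Phi_eq[OF v c v] c' by simp
  then show "xv f v c' = xv f v c" by (simp add: xv_def)
qed

lemma Tr_Phi:
  assumes v: "v \<in> V" and c: "c \<in> CC PB.a PA.s"
  shows "Tr f (PB.Phi (v, c)) = M (xv f v) c"
proof -
  have cB: "c \<in> CC PB.a PB.s" using c sB by simp
  have y: "PB.Phi (v, c) \<in> verts PB.H" using v cB by (simp add: PB.verts_H)
  have ex: "\<exists>p. fst p \<in> V \<and> snd p \<in> CC PB.a PA.s \<and> PB.Phi p = PB.Phi (v, c)"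
    using v c by (intro exI[of _ "(v, c)"]) simp
  obtain v' c' where r: "rep (PB.Phi (v, c)) = (v', c')" by (cases "rep (PB.Phi (v, c))") blast
  have pr: "v' \<in> V" "c' \<in> CC PB.a PA.s" "PB.Phi (v', c') = PB.Phi (v, c)"
    using someI_ex[OF ex] r unfolding rep_def by auto
  have c'B: "c' \<in> CC PB.a PB.s" using pr sB by simp
  have "v' = v" "c' \<in> nb (PB.vtyp v) PB.a PB.s c" using PB.Phi_eq[OF v cB pr(1) c'B] pr(3) by auto
  then have nbc: "c' \<in> nb (PA.vtyp v) PB.a PA.s c" using sB vtyp_eq by simp
  have "\<forall>c\<in>CC PB.a PA.s. \<forall>c'\<in>nb (PA.vtyp v) PB.a PA.s c. M (xv f v) c' = M (xv f v) c"
    by (rule mdl.M_cons[OF mdl_ok xv_cons[OF v]])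
  then have "M (xv f v) c' = M (xv f v) c" using c nbc by blast
  then show ?thesis using y r \<open>v' = v\<close> by (simp add: Tr_def)
qed


lemma verts_H_cases:
  assumes "y \<in> verts PB.H"
  obtains v c where "v \<in> V" "c \<in> CC PB.a PA.s" "y = PB.Phi (v, c)"
  using assms sB by (auto simp: PB.verts_H)

lemma Tr_eig:
  assumes f: "is_eigenfunction PA.H \<mu> f"
  shows "is_eigenfunction PB.H \<mu> (Tr f)"
  unfolding is_eigenfunction_def
proof (intro conjI allI impI ballI)
  fix y assume "y \<notin> verts PB.H"
  then show "Tr f y = 0" by (simp add: Tr_def)
next
  fix y assume y: "y \<in> verts PB.H"
  then obtain v c where v: "v \<in> V" and c: "c \<in> CC PB.a PA.s" and yv: "y = PB.Phi (v, c)"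
    by (rule verts_H_cases)
  have cB: "c \<in> CC PB.a PB.s" using c sB by simp
  define yv where "yv = (\<lambda>c0. LG G \<mu> (\<lambda>w. xv f w c0) v)"
  have hA: "\<forall>c\<in>CC PA.a PA.s. (\<Sum>c'\<in>nb (PA.vtyp v) PA.a PA.s c. yv c') = 0"
  proof
    fix c assume c: "c \<in> CC PA.a PA.s"
    have "PA.Phi (v, c) \<in> verts PA.H" using v c by (simp add: PA.verts_H)
    then have "mag_laplacian PA.H f (PA.Phi (v, c)) - \<mu> * f (PA.Phi (v, c)) = 0"
      using f by (simp add: is_eigenfunction_def)
    then have "(1 / of_nat (card (nb (PA.vtyp v) PA.a PA.s c))) * (\<Sum>c'\<in>nb (PA.vtyp v) PA.a PA.s c. yv c') = 0"
      unfolding PA.lap_H[OF v c] by (simp add: yv_def xv_def)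
    then show "(\<Sum>c'\<in>nb (PA.vtyp v) PA.a PA.s c. yv c') = 0"
      using PA.card_nb_pos[OF c, of "PA.vtyp v"] by simp
  qed
  have hB: "\<forall>c\<in>CC PB.a PA.s. (\<Sum>c'\<in>nb (PA.vtyp v) PB.a PA.s c. M yv c') = 0"
    by (rule mdl.M_eig[OF mdl_ok hA])
  have L: "LG G \<mu> (\<lambda>w. Tr f (PB.Phi (w, c'))) v = M yv c'" if c': "c' \<in> CC PB.a PA.s" for c'
  proof -
    have "LG G \<mu> (\<lambda>w. Tr f (PB.Phi (w, c'))) v = LG G \<mu> (\<lambda>w. M (xv f w) c') v"
      using Tr_Phi c' PA.mg v by (intro LG_cong) auto
    also have "\<dots> = M yv c'" unfolding yv_def by (rule LG_MM[OF PA.fin_out])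
    finally show ?thesis .
  qed
  have "mag_laplacian PB.H (Tr f) y - \<mu> * Tr f y =
      (1 / of_nat (card (nb (PB.vtyp v) PB.a PB.s c))) * (\<Sum>c'\<in>nb (PB.vtyp v) PB.a PB.s c. LG G \<mu> (\<lambda>w. Tr f (PB.Phi (w, c'))) v)"
    unfolding yv by (rule PB.lap_H[OF v cB])
  also have "(\<Sum>c'\<in>nb (PB.vtyp v) PB.a PB.s c. LG G \<mu> (\<lambda>w. Tr f (PB.Phi (w, c'))) v) =
      (\<Sum>c'\<in>nb (PA.vtyp v) PB.a PA.s c. M yv c')"
  proof -
    have "\<And>c'. c' \<in> nb (PA.vtyp v) PB.a PA.s c \<Longrightarrow> c' \<in> CC PB.a PA.s"
      using PB.nb_sub[OF cB] sB vtyp_eq by auto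
    then show ?thesis using sB vtyp_eq L by (intro sum.cong) auto
  qed
  also have "\<dots> = 0" using hB c by blast
  finally show "mag_laplacian PB.H (Tr f) y = \<mu> * Tr f y" by simp
qed

lemma Tr_lin: "Tr (\<lambda>y. \<Sum>k<(n::nat). \<alpha> k * F k y) y = (\<Sum>k<n. \<alpha> k * Tr (F k) y)"
proof (cases "y \<in> verts PB.H")
  case True
  have "xv (\<lambda>y. \<Sum>k<n. \<alpha> k * F k y) v = (\<lambda>c0. \<Sum>k<n. \<alpha> k * xv (F k) v c0)" for v
    by (simp add: xv_def)
  moreover have "M (\<lambda>c0. \<Sum>k<n. \<alpha> k * xv (F k) v c0) c = (\<Sum>k<n. \<alpha> k * M (xv (F k) v) c)" for v c
    by (rule MM_lincomb) simp
  ultimately show ?thesis using True by (simp add: Tr_def)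
next
  case False
  then show ?thesis by (simp add: Tr_def)
qed

lemma Tr_inj:
  assumes f: "is_eigenfunction PA.H \<mu> f" and z: "\<forall>y. Tr f y = 0"
  shows "f y = 0"
proof (cases "y \<in> verts PA.H")
  case True
  then obtain v c where v: "v \<in> V" and c: "c \<in> CC PA.a PA.s" and yv: "y = PA.Phi (v, c)"
    by (auto simp: PA.verts_H)
  have "\<forall>c'\<in>CC PB.a PA.s. M (xv f v) c' = 0"
    using Tr_Phi[OF v] z by metis
  then have "\<forall>c\<in>CC PA.a PA.s. xv f v c = 0" by (rule mdl.M_inj[OF mdl_ok])
  then show ?thesis using c yv by (simp add: xv_def)
next
  case False
  then show ?thesis using f by (simp add: is_eigenfunction_def)
qed

lemma eigset_sub: "eigset PA.H \<mu> \<subseteq> eigset PB.H \<mu>"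
proof
  fix n assume "n \<in> eigset PA.H \<mu>"
  then obtain F where eF: "\<forall>i<n. is_eigenfunction PA.H \<mu> (F i)" and iF: "lin_indep_fam n F"
    by (auto simp: eigset_def)
  define F' where "F' i = Tr (F i)" for i
  have "\<forall>i<n. is_eigenfunction PB.H \<mu> (F' i)" using eF Tr_eig by (simp add: F'_def)
  moreover have "lin_indep_fam n F'"
    unfolding lin_indep_fam_def
  proof (intro allI impI)
    fix cc :: "nat \<Rightarrow> complex" and i
    assume h: "\<forall>v. (\<Sum>i<n. cc i * F' i v) = 0" and i: "i < n"
    have "\<forall>y. Tr (\<lambda>y. \<Sum>k<n. cc k * F k y) y = 0" using h by (simp add: Tr_lin F'_def)
    then have "\<forall>y. (\<Sum>k<n. cc k * F k y) = 0"
      using Tr_inj[OF eig_lincomb[OF eF]] by blast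
    then show "cc i = 0" using iF i unfolding lin_indep_fam_def by blast
  qed
  ultimately show "n \<in> eigset PB.H \<mu>" by (auto simp: eigset_def)
qed

end




lemma sum_fiber:
  fixes G :: "'b \<Rightarrow> real"
  assumes "finite S"
  shows "(\<Sum>y\<in>h ` S. G y) = (\<Sum>x\<in>S. G (h x) / real (card {x'\<in>S. h x' = h x}))"
proof -
  have "(\<Sum>x\<in>S. G (h x) / real (card {x'\<in>S. h x' = h x})) =
      (\<Sum>y\<in>h ` S. \<Sum>x\<in>{x\<in>S. h x = y}. G (h x) / real (card {x'\<in>S. h x' = h x}))"
    by (rule sum.image_gen[OF assms])
  also have "\<dots> = (\<Sum>y\<in>h ` S. G y)"
  proof (rule sum.cong[OF refl])
    fix y assume y: "y \<in> h ` S"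
    have fin: "finite {x\<in>S. h x = y}" using assms by simp
    have ne: "{x\<in>S. h x = y} \<noteq> {}" using y by auto
    have "(\<Sum>x\<in>{x\<in>S. h x = y}. G (h x) / real (card {x'\<in>S. h x' = h x})) =
        (\<Sum>x\<in>{x\<in>S. h x = y}. G y / real (card {x'\<in>S. h x' = y}))"
      by (rule sum.cong) auto
    also have "\<dots> = G y" using fin ne by simp
    finally show "(\<Sum>x\<in>{x\<in>S. h x = y}. G (h x) / real (card {x'\<in>S. h x' = h x})) = G y" .
  qed
  finally show ?thesis by simp
qed

lemma iso_deg_sum:
  assumes iso: "mg_isomorphic K1 K2" and srcin: "\<forall>e\<in>edges K1. src K1 e \<in> verts K1"
  shows "(\<Sum>y\<in>verts K1. F (card (out_edges K1 y))) = (\<Sum>y\<in>verts K2. F (card (out_edges K2 y)))"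
proof -
  obtain \<phi> \<psi> where bv: "bij_betw \<phi> (verts K1) (verts K2)" and be: "bij_betw \<psi> (edges K1) (edges K2)"
    and hs: "\<forall>e\<in>edges K1. src K2 (\<psi> e) = \<phi> (src K1 e)"
    using iso unfolding mg_isomorphic_def by blast
  have out: "out_edges K2 (\<phi> y) = \<psi> ` out_edges K1 y" if y: "y \<in> verts K1" for y
  proof (intro equalityI subsetI)
    fix e' assume "e' \<in> out_edges K2 (\<phi> y)"
    then have e': "e' \<in> edges K2" "src K2 e' = \<phi> y" by (auto simp: out_edges_def)
    then obtain e where e: "e \<in> edges K1" "e' = \<psi> e"
      using bij_betw_imp_surj_on[OF be] by (metis imageE)
    have "\<phi> (src K1 e) = \<phi> y" using hs e e' by simp
    then have "src K1 e = y" using bij_betw_imp_inj_on[OF bv] srcin e y by (metis inj_on_def)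
    then show "e' \<in> \<psi> ` out_edges K1 y" using e by (auto simp: out_edges_def)
  next
    fix e' assume "e' \<in> \<psi> ` out_edges K1 y"
    then obtain e where e: "e \<in> edges K1" "src K1 e = y" "e' = \<psi> e" by (auto simp: out_edges_def)
    then show "e' \<in> out_edges K2 (\<phi> y)"
      using hs bij_betw_apply[OF be] by (auto simp: out_edges_def)
  qed
  have cd: "card (out_edges K2 (\<phi> y)) = card (out_edges K1 y)" if y: "y \<in> verts K1" for y
  proof -
    have "inj_on \<psi> (out_edges K1 y)"
      using bij_betw_imp_inj_on[OF be] by (rule inj_on_subset) (auto simp: out_edges_def)
    then show ?thesis using out[OF y] by (simp add: card_image)
  qed
  have "(\<Sum>y\<in>verts K2. F (card (out_edges K2 y))) = (\<Sum>y\<in>verts K1. F (card (out_edges K2 (\<phi> y))))"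
    by (rule sum.reindex_bij_betw[OF bv, symmetric])
  also have "\<dots> = (\<Sum>y\<in>verts K1. F (card (out_edges K1 y)))"
    using cd by (intro sum.cong) auto
  finally show ?thesis by simp
qed

definition QQ :: "'v set \<Rightarrow> ('v \<Rightarrow> nat) \<Rightarrow> nat multiset \<Rightarrow> (nat \<Rightarrow> real) \<Rightarrow> real" where
  "QQ D d X F = (\<Sum>v\<in>D. \<Sum>x\<in>#X. F (x * d v))"

lemma QQ_add: "QQ D d (add_mset m X) F = (\<Sum>v\<in>D. F (m * d v)) + QQ D d X F"
  by (simp add: QQ_def sum.distrib)

lemma msum_nonneg: "(\<And>x. x \<in># X \<Longrightarrow> (0::real) \<le> f x) \<Longrightarrow> 0 \<le> (\<Sum>x\<in>#X. f x)"
  by (induction X) (auto intro: add_nonneg_nonneg)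

lemma msum_zero: "(\<And>x. x \<in># X \<Longrightarrow> (f x::real) = 0) \<Longrightarrow> (\<Sum>x\<in>#X. f x) = 0"
  by (induction X) auto

lemma sum_mset_ge_mem:
  fixes f :: "nat \<Rightarrow> real"
  assumes "m \<in># X" "\<forall>x. f x \<ge> 0"
  shows "f m \<le> (\<Sum>x\<in>#X. f x)"
proof -
  have "(\<Sum>x\<in>#X. f x) = f m + (\<Sum>x\<in>#X - {#m#}. f x)"
    using assms(1) by (metis add_mset_remove_trivial_If image_mset_add_mset sum_mset.add_mset)
  moreover have "(\<Sum>x\<in>#X - {#m#}. f x) \<ge> 0" using assms(2) by (intro msum_nonneg) simp
  ultimately show ?thesis by simp
qed

lemma QQ_sep:
  fixes d :: "'v \<Rightarrow> nat"
  assumes fin: "finite D" and v0: "v0 \<in> D" and mx: "\<forall>v\<in>D. d v \<le> d v0" and pos: "d v0 > 0"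
    and m: "m \<in># X" and lt: "\<forall>x\<in>#Y. x < m"
  shows "QQ D d X (\<lambda>n. of_bool (n = m * d v0)) \<noteq> QQ D d Y (\<lambda>n. of_bool (n = m * d v0))"
proof -
  define F :: "nat \<Rightarrow> real" where "F n = of_bool (n = m * d v0)" for n
  have "QQ D d Y F = 0"
    unfolding QQ_def
  proof (intro sum.neutral ballI)
    fix v assume v: "v \<in> D"
    have "\<And>x. x \<in># Y \<Longrightarrow> F (x * d v) = 0"
    proof -
      fix x assume "x \<in># Y"
      then have "x < m" using lt by blast
      then have "x * d v \<le> x * d v0" using mx v by simp
      also have "\<dots> < m * d v0" using \<open>x < m\<close> pos by simp
      finally show "F (x * d v) = 0" by (simp add: F_def)
    qed
    then show "(\<Sum>x\<in>#Y. F (x * d v)) = 0" by (rule msum_zero)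
  qed
  moreover have "QQ D d X F \<ge> 1"
  proof -
    have "1 = F (m * d v0)" by (simp add: F_def)
    also have "\<dots> \<le> (\<Sum>x\<in>#X. F (x * d v0))"
      using sum_mset_ge_mem[of m X "\<lambda>x. F (x * d v0)"] m by (simp add: F_def)
    also have "\<dots> \<le> QQ D d X F"
      unfolding QQ_def using fin v0
      by (intro member_le_sum) (auto simp: F_def intro!: msum_nonneg)
    finally show ?thesis .
  qed
  ultimately have "QQ D d X F \<noteq> QQ D d Y F" by simp
  moreover have "F = (\<lambda>n. of_bool (n = m * d v0))" by (rule ext) (simp add: F_def)
  ultimately show ?thesis by simp
qed

lemma QQ_cancel:
  fixes d :: "'v \<Rightarrow> nat"
  assumes fin: "finite D" and ne: "D \<noteq> {}" and dpos: "\<forall>v\<in>D. d v > 0"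
  shows "(\<forall>F. QQ D d A F = QQ D d B F) \<Longrightarrow> A = B"
proof (induction "size A" arbitrary: A B rule: less_induct)
  case less
  obtain v0 where v0: "v0 \<in> D" "\<forall>v\<in>D. d v \<le> d v0"
  proof -
    have "Max (d ` D) \<in> d ` D" using fin ne by simp
    then obtain v0 where "v0 \<in> D" "d v0 = Max (d ` D)" by auto
    moreover have "\<forall>v\<in>D. d v \<le> Max (d ` D)" using fin by simp
    ultimately show ?thesis using that by auto
  qed
  have pos: "d v0 > 0" using dpos v0 by simp
  have sep: "\<not> (m \<in># X \<and> (\<forall>x\<in>#Y. x < m))" if "\<forall>F. QQ D d X F = QQ D d Y F" for m X Y
    using QQ_sep[OF fin v0 pos, of m X Y] that by blast
  show ?case
  proof (cases "A = {#}")
    case True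
    show ?thesis
    proof (rule ccontr)
      assume "A \<noteq> B"
      then obtain m where "m \<in># B" using True by (metis multiset_nonemptyE)
      then show False using sep[of B A] less.prems True by auto
    qed
  next
    case False
    have Bne: "B \<noteq> {#}"
    proof
      assume "B = {#}"
      obtain m where "m \<in># A" using False by (metis multiset_nonemptyE)
      then show False using sep[of A B] less.prems \<open>B = {#}\<close> by auto
    qed
    define mA where "mA = Max (set_mset A)"
    define mB where "mB = Max (set_mset B)"
    have mA: "mA \<in># A" "\<forall>x\<in>#A. x \<le> mA" using False by (auto simp: mA_def)
    have mB: "mB \<in># B" "\<forall>x\<in>#B. x \<le> mB" using Bne by (auto simp: mB_def)
    have "\<not> mA > mB"
    proof
      assume "mA > mB"
      then have "\<forall>x\<in>#B. x < mA" using mB by force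
      then show False using sep[of A B] less.prems mA by blast
    qed
    moreover have "\<not> mB > mA"
    proof
      assume "mB > mA"
      then have "\<forall>x\<in>#A. x < mB" using mA by force
      then show False using sep[of B A] less.prems mB by metis
    qed
    ultimately have eqm: "mA = mB" by simp
    define A' where "A' = A - {#mA#}"
    define B' where "B' = B - {#mA#}"
    have A: "A = add_mset mA A'" using mA by (simp add: A'_def)
    have B: "B = add_mset mA B'" using mB eqm by (simp add: B'_def)
    have "\<forall>F. QQ D d A' F = QQ D d B' F" using less.prems A B QQ_add by (metis add_left_cancel)
    moreover have "size A' < size A" using A by simp
    ultimately have "A' = B'" using less.hyps by blast
    then show ?thesis using A B by simp
  qed
qed

context gl
begin

lemma src_in_H: "x \<in> edges H \<Longrightarrow> src H x \<in> verts H"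
proof -
  assume x: "x \<in> edges H"
  then obtain e i j where xe: "x = ((e, j), i)" "e \<in> E" "(i, j) \<in> CC a s"
    using edge_H_cases by blast
  have "src G e \<in> V" using mgE[OF xe(2)] by simp
  then show ?thesis using xe by (simp add: src_H verts_H)
qed

lemma fiber_H:
  assumes v: "v \<in> V" and c: "c \<in> CC a s"
  shows "{x \<in> V \<times> CC a s. Phi x = Phi (v, c)} = {v} \<times> nb (vtyp v) a s c"
proof (intro equalityI subsetI)
  fix x assume "x \<in> {x \<in> V \<times> CC a s. Phi x = Phi (v, c)}"
  then obtain v' c' where x: "x = (v', c')" "v' \<in> V" "c' \<in> CC a s" "Phi (v', c') = Phi (v, c)" by auto
  then show "x \<in> {v} \<times> nb (vtyp v) a s c" using Phi_eq[OF v c x(2,3)] by simp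
next
  fix x assume "x \<in> {v} \<times> nb (vtyp v) a s c"
  then obtain c' where x: "x = (v, c')" "c' \<in> nb (vtyp v) a s c" by auto
  have "c' \<in> CC a s" using x nb_sub[OF c] by blast
  then show "x \<in> {x \<in> V \<times> CC a s. Phi x = Phi (v, c)}" using Phi_eq[OF v c v] x v by simp
qed

lemma deg_H:
  assumes v: "v \<in> V" and c: "c \<in> CC a s"
  shows "card (out_edges H (Phi (v, c))) = card (nb (vtyp v) a s c) * card (out_edges G v)"
proof -
  have "card (out_edges H (Phi (v, c))) = card (out_edges G v \<times> nb (vtyp v) a s c)"
    unfolding out_H[OF v c] by (rule card_image[OF inj_on_subset[OF emap_inj subset_UNIV]])
  also have "\<dots> = card (nb (vtyp v) a s c) * card (out_edges G v)"
    by (simp add: card_cartesian_product)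
  finally show ?thesis .
qed

lemma card_CC_r: "card (CC a s) = r"
  by (simp add: card_CC sum_a)

lemma deg_sum:
  assumes rpos: "r > 0"
  shows "(\<Sum>y\<in>verts H. F (card (out_edges H y))) =
    (\<Sum>v\<in>V. if v \<in> V1 then F (r * card (out_edges G v))
             else if v \<in> V0 then (\<Sum>x\<in>#A. F (x * card (out_edges G v)))
             else real r * F (card (out_edges G v)))"
proof -
  define n where "n v c = card (nb (vtyp v) a s c)" for v c
  define d where "d v = card (out_edges G v)" for v
  have "(\<Sum>y\<in>verts H. F (card (out_edges H y))) =
      (\<Sum>x\<in>V \<times> CC a s. F (card (out_edges H (Phi x))) / real (card {x'\<in>V \<times> CC a s. Phi x' = Phi x}))"
    unfolding verts_H by (rule sum_fiber) (simp add: finV)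
  also have "\<dots> = (\<Sum>(v, c)\<in>V \<times> CC a s. F (n v c * d v) / real (n v c))"
  proof (rule sum.cong[OF refl])
    fix x assume "x \<in> V \<times> CC a s"
    then obtain v c where x: "x = (v, c)" "v \<in> V" "c \<in> CC a s" by auto
    have "card {x'\<in>V \<times> CC a s. Phi x' = Phi x} = n v c"
      unfolding x fiber_H[OF x(2,3)] n_def by (simp add: card_cartesian_product)
    then show "F (card (out_edges H (Phi x))) / real (card {x'\<in>V \<times> CC a s. Phi x' = Phi x}) =
        (case x of (v, c) \<Rightarrow> F (n v c * d v) / real (n v c))"
      using deg_H[OF x(2,3)] by (simp add: x n_def d_def)
  qed
  also have "\<dots> = (\<Sum>v\<in>V. \<Sum>c\<in>CC a s. F (n v c * d v) / real (n v c))"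
    by (rule sum.cartesian_product[symmetric])
  also have "\<dots> = (\<Sum>v\<in>V. if v \<in> V1 then F (r * d v)
             else if v \<in> V0 then (\<Sum>x\<in>#A. F (x * d v)) else real r * F (d v))"
  proof (rule sum.cong[OF refl])
    fix v assume v: "v \<in> V"
    show "(\<Sum>c\<in>CC a s. F (n v c * d v) / real (n v c)) = (if v \<in> V1 then F (r * d v)
             else if v \<in> V0 then (\<Sum>x\<in>#A. F (x * d v)) else real r * F (d v))"
    proof (cases "v \<in> V1")
      case True
      then have "\<And>c. n v c = r" by (simp add: n_def vtyp_def nb_def card_CC_r)
      then show ?thesis using True rpos by (simp add: card_CC_r)
    next
      case nV1: False
      show ?thesis
      proof (cases "v \<in> V0")
        case True
        have "(\<Sum>c\<in>CC a s. F (n v c * d v) / real (n v c)) = (\<Sum>i=1..s. \<Sum>j=1..a i. F (a i * d v) / real (a i))"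
          unfolding sum_CC using True nV1 by (simp add: n_def vtyp_def nb_def)
        also have "\<dots> = (\<Sum>i=1..s. F (a i * d v))"
        proof (rule sum.cong[OF refl])
          fix i assume "i \<in> {1..s}"
          then have "a i > 0" by (rule a_pos)
          then show "(\<Sum>j=1..a i. F (a i * d v) / real (a i)) = F (a i * d v)" by simp
        qed
        also have "\<dots> = (\<Sum>x\<in>#A. F (x * d v))" by (rule sum_map_a)
        finally show ?thesis using True nV1 by simp
      next
        case False
        then have "\<And>c. n v c = 1" using nV1 by (simp add: n_def vtyp_def nb_def)
        then show ?thesis using False nV1 by (simp add: card_CC_r)
      qed
    qed
  qed
  finally show ?thesis unfolding d_def by simp
qed

end




lemma eig_mult_eigset: "eig_mult K \<mu> = Max (eigset K \<mu>)"
  by (simp add: eig_mult_def eigset_def)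

theorem theorem5p8:
  fixes G :: "('v, 'e) mgraph" and V0 V1 :: "'v set"
    and A B :: "nat multiset" and r s :: nat
  assumes "magnetic_graph G"
    and "V0 \<subseteq> verts G" and "V1 \<subset> V0"
    and "r \<ge> 4"
    and "is_partition s r A" and "is_partition s r B" and "A \<noteq> B"
  shows "isospectral (contracted_union G V0 V1 A) (contracted_union G V0 V1 B) \<and>
         \<not> mg_isomorphic (contracted_union G V0 V1 A) (contracted_union G V0 V1 B)"
proof -
  have pA: "0 \<notin># A" "size A = s" "sum_mset A = r" using assms(5) by (auto simp: is_partition_def)
  have pB: "0 \<notin># B" "size B = s" "sum_mset B = r" using assms(6) by (auto simp: is_partition_def)
  have V10: "V1 \<subseteq> V0" using assms(3) by blast
  interpret AB: gl2 G V0 V1 A B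
    by (unfold_locales) (use assms pA pB V10 in auto)
  interpret BA: gl2 G V0 V1 B A
    by (unfold_locales) (use assms pA pB V10 in auto)
  have HA: "AB.PA.H = contracted_union G V0 V1 A" by (simp add: AB.PA.H_def)
  have HB: "AB.PB.H = contracted_union G V0 V1 B" by (simp add: AB.PB.H_def)
  have iso: "isospectral (contracted_union G V0 V1 A) (contracted_union G V0 V1 B)"
    unfolding isospectral_def
  proof
    fix \<mu>
    have "eigset (contracted_union G V0 V1 A) \<mu> = eigset (contracted_union G V0 V1 B) \<mu>"
      using AB.eigset_sub[of \<mu>] BA.eigset_sub[of \<mu>] HA HB by simp
    then show "eig_mult (contracted_union G V0 V1 A) \<mu> = eig_mult (contracted_union G V0 V1 B) \<mu>"
      by (simp add: eig_mult_eigset)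
  qed
  have noniso: "\<not> mg_isomorphic (contracted_union G V0 V1 A) (contracted_union G V0 V1 B)"
  proof
    assume m: "mg_isomorphic (contracted_union G V0 V1 A) (contracted_union G V0 V1 B)"
    define D where "D = V0 - V1"
    define dG where "dG v = card (out_edges G v)" for v
    have rA: "AB.PA.r = r" using pA by (simp add: AB.PA.r_sum)
    have rB: "AB.PB.r = r" using pB by (simp add: AB.PB.r_sum)
    have rpos: "r > 0" using assms(4) by simp
    have DV: "D \<subseteq> verts G" using assms(2) by (auto simp: D_def)
    have finD: "finite D" using DV AB.PA.finV finite_subset by blast
    have neD: "D \<noteq> {}" using assms(3) by (auto simp: D_def)
    have dpos: "\<forall>v\<in>D. dG v > 0"
      using DV AB.PA.out_ne AB.PA.fin_out by (auto simp: dG_def card_gt_0_iff)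
    define R where "R F v = (if v \<in> V1 then F (r * dG v) else if v \<in> V0 then 0 else real r * F (dG v))"
      for F :: "nat \<Rightarrow> real" and v
    have split: "(\<Sum>v\<in>verts G. if v \<in> V1 then F (r * dG v)
             else if v \<in> V0 then (\<Sum>x\<in>#X. F (x * dG v)) else real r * F (dG v)) =
          (\<Sum>v\<in>verts G. R F v) + QQ D dG X F" for F X
    proof -
      have "(\<Sum>v\<in>verts G. if v \<in> V1 then F (r * dG v)
             else if v \<in> V0 then (\<Sum>x\<in>#X. F (x * dG v)) else real r * F (dG v)) =
          (\<Sum>v\<in>verts G. R F v + (if v \<in> D then (\<Sum>x\<in>#X. F (x * dG v)) else 0))"
        by (rule sum.cong) (auto simp: R_def D_def)
      also have "\<dots> = (\<Sum>v\<in>verts G. R F v) + (\<Sum>v\<in>verts G. if v \<in> D then (\<Sum>x\<in>#X. F (x * dG v)) else 0)"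
        by (rule sum.distrib)
      also have "(\<Sum>v\<in>verts G. if v \<in> D then (\<Sum>x\<in>#X. F (x * dG v)) else 0) = QQ D dG X F"
        unfolding QQ_def using sum.inter_restrict[OF AB.PA.finV, of "\<lambda>v. \<Sum>x\<in>#X. F (x * dG v)" D] DV
        by (simp add: Int_absorb1)
      finally show ?thesis .
    qed
    have "QQ D dG A F = QQ D dG B F" for F
    proof -
      have "(\<Sum>y\<in>verts AB.PA.H. F (card (out_edges AB.PA.H y))) = (\<Sum>y\<in>verts AB.PB.H. F (card (out_edges AB.PB.H y)))"
        using iso_deg_sum[of AB.PA.H AB.PB.H F] m HA HB AB.PA.src_in_H by simp
      then show ?thesis
        unfolding AB.PA.deg_sum[unfolded rA, OF rpos] AB.PB.deg_sum[unfolded rB, OF rpos]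
        unfolding dG_def[symmetric] split by simp
    qed
    then have "A = B" using QQ_cancel[OF finD neD dpos] by blast
    then show False using assms(7) by simp
  qed
  show ?thesis using iso noniso by simp
qed


end
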